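(* The category of partial groups (with morphisms of partial groups) is equivalent to the full subcategory of the category of simplicial sets whose objects are the reduced $N$-simplicial sets with inversion.
   Context: A partial group is a tuple $(\mathcal{M},\mathbf{D},\Pi,(-)^{-1})$: $\mathcal{M}$ is a set, $\mathbf{D}$ is a subset of the free monoid $\mathbf{W}(\mathcal{M})$ of words in $\mathcal{M}$ containing all words of length one and such that $u\circ v\in\mathbf{D}$ implies $u,v\in\mathbf{D}$ ($\circ$ = concatenation); $\Pi\colon\mathbf{D}\to\mathcal{M}$ restricts to the identity on words of length one and satisfies: if $u\circ v\circ w\in\mathbf{D}$ then $u\circ(\Pi(v))\circ w\in\mathbf{D}$ and $\Pi(u\circ v\circ w)=\Pi(u\circ(\Pi(v))\circ w)$; the unit is $1=\Pi(\emptyset)$; $x\mapsto x^{-1}$ is an involutive bijection of $\mathcal{M}$, extended to words by $(x_1,\dots,x_n)^{-1}=(x_n^{-1},\dots,x_1^{-1})$, such that $u\in\mathbf{D}$ implies $u^{-1}\circ u\in\mathbf{D}$ and $\Pi(u^{-1}\circ u)=1$. A morphism $\beta\colon\mathcal{M}\to\mathcal{M}'$ of partial groups is a map sending $\mathbf{D}$ into $\mathbf{D}'$ (letterwise) with $\beta(\Pi(u))=\Pi'(\beta(u))$ for all $u\in\mathbf{D}$. A simplicial set $X$ is reduced if $X_0$ is a point $v$; its unit is $1_X=s_0(v)$. The enumerating operator $E_n\colon X_n\to X_1^{n}$ sends an $n$-simplex to its consecutive edges; $X$ is an $N$-simplicial set if each $E_n$ is injective, and a simplex with edges $x_1,\dots,x_n$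 is written $[x_1|\dots|x_n]$. The product operator $\Pi\colon X_n\to X_1$ sends a simplex to its edge from vertex $0$ to vertex $n$. The opposite $X^{op}$ has the same simplices with $d_i^{op}=d_{n-i}$, $s_i^{op}=s_{n-i}$. An inversion on a reduced $N$-simplicial set $X$ is a simplicial map $\nu\colon X\to X^{op}$ with $\nu\circ\nu=\mathrm{Id}$ such that for every $x\in X_n$, $n\ge1$, $[\nu(x)|x]\in X_{2n}$ and $\Pi([\nu(x)|x])=1_X$. *)

theory Defs
  imports Main
begin

text \<open>Words in the free monoid W(M) are lists; concatenation is append.\<close>

record 'a partial_group =
  pg_carrier :: "'a set"
  pg_dom :: "'a list set"
  pg_prod :: "'a list \<Rightarrow> 'a"
  pg_inv :: "'a \<Rightarrow> 'a"

definition pg_unit :: "('a, 'z) partial_group_scheme \<Rightarrow> 'a" where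
  "pg_unit M = pg_prod M []"

definition inv_word :: "('a, 'z) partial_group_scheme \<Rightarrow> 'a list \<Rightarrow> 'a list" where
  "inv_word M u = rev (map (pg_inv M) u)"

definition is_partial_group :: "('a, 'z) partial_group_scheme \<Rightarrow> bool" where
  "is_partial_group M \<longleftrightarrow>
     pg_dom M \<subseteq> lists (pg_carrier M)
   \<and> [] \<in> pg_dom M
   \<and> (\<forall>x\<in>pg_carrier M. [x] \<in> pg_dom M)
   \<and> (\<forall>u v. u @ v \<in> pg_dom M \<longrightarrow> u \<in> pg_dom M \<and> v \<in> pg_dom M)
   \<and> (\<forall>u\<in>pg_dom M. pg_prod M u \<in> pg_carrier M)
   \<and> (\<forall>x\<in>pg_carrier M. pg_prod M [x] = x)
   \<and> (\<forall>u v w. u @ v @ w \<in> pg_dom M \<longrightarrow>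
         u @ [pg_prod M v] @ w \<in> pg_dom M
       \<and> pg_prod M (u @ v @ w) = pg_prod M (u @ [pg_prod M v] @ w))
   \<and> (\<forall>x\<in>pg_carrier M. pg_inv M x \<in> pg_carrier M \<and> pg_inv M (pg_inv M x) = x)
   \<and> (\<forall>u\<in>pg_dom M. inv_word M u @ u \<in> pg_dom M
         \<and> pg_prod M (inv_word M u @ u) = pg_unit M)"

text \<open>Morphisms of partial groups (only their values on the carrier matter).\<close>
definition pg_hom :: "('a, 'z) partial_group_scheme \<Rightarrow> ('b, 'y) partial_group_scheme
    \<Rightarrow> ('a \<Rightarrow> 'b) \<Rightarrow> bool" where
  "pg_hom M M' \<beta> \<longleftrightarrow>
     (\<forall>x\<in>pg_carrier M. \<beta> x \<in> pg_carrier M')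
   \<and> (\<forall>u\<in>pg_dom M. map \<beta> u \<in> pg_dom M' \<and> \<beta> (pg_prod M u) = pg_prod M' (map \<beta> u))"

text \<open>face X n i is d_i : X_n \<rightarrow> X_(n-1) (for n \<ge> 1, i \<le> n) and
  degen X n i is s_i : X_n \<rightarrow> X_(n+1) (for i \<le> n).\<close>
record 's sset =
  simp :: "nat \<Rightarrow> 's set"
  face :: "nat \<Rightarrow> nat \<Rightarrow> 's \<Rightarrow> 's"
  degen :: "nat \<Rightarrow> nat \<Rightarrow> 's \<Rightarrow> 's"

definition is_sset :: "'s sset \<Rightarrow> bool" where
  "is_sset X \<longleftrightarrow>
     (\<forall>n i x. 1 \<le> n \<and> i \<le> n \<and> x \<in> simp X n \<longrightarrow> face X n i x \<in> simp X (n - 1))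
   \<and> (\<forall>n i x. i \<le> n \<and> x \<in> simp X n \<longrightarrow> degen X n i x \<in> simp X (Suc n))
   \<and> (\<forall>n i j x. 2 \<le> n \<and> i < j \<and> j \<le> n \<and> x \<in> simp X n \<longrightarrow>
        face X (n - 1) i (face X n j x) = face X (n - 1) (j - 1) (face X n i x))
   \<and> (\<forall>n i j x. i < j \<and> j \<le> n \<and> x \<in> simp X n \<longrightarrow>
        face X (Suc n) i (degen X n j x) = degen X (n - 1) (j - 1) (face X n i x))
   \<and> (\<forall>n j x. j \<le> n \<and> x \<in> simp X n \<longrightarrow>
        face X (Suc n) j (degen X n j x) = x \<and> face X (Suc n) (Suc j) (degen X n j x) = x)
   \<and> (\<forall>n i j x. Suc j < i \<and> i \<le> Suc n \<and> x \<in> simp X n \<longrightarrow>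
        face X (Suc n) i (degen X n j x) = degen X (n - 1) j (face X n (i - 1) x))
   \<and> (\<forall>n i j x. i \<le> j \<and> j \<le> n \<and> x \<in> simp X n \<longrightarrow>
        degen X (Suc n) i (degen X n j x) = degen X (Suc n) (Suc j) (degen X n i x))"

text \<open>Simplicial maps (only their values on simplices matter).\<close>
definition sset_map :: "'s sset \<Rightarrow> 't sset \<Rightarrow> (nat \<Rightarrow> 's \<Rightarrow> 't) \<Rightarrow> bool" where
  "sset_map X Y f \<longleftrightarrow>
     (\<forall>n x. x \<in> simp X n \<longrightarrow> f n x \<in> simp Y n)
   \<and> (\<forall>n i x. 1 \<le> n \<and> i \<le> n \<and> x \<in> simp X n \<longrightarrow>
        f (n - 1) (face X n i x) = face Y n i (f n x))
   \<and> (\<forall>n i x. i \<le> n \<and> x \<in> simp X n \<longrightarrow>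
        f (Suc n) (degen X n i x) = degen Y n i (f n x))"

definition sset_iso :: "'s sset \<Rightarrow> 't sset \<Rightarrow> bool" where
  "sset_iso X Y \<longleftrightarrow> (\<exists>f g. sset_map X Y f \<and> sset_map Y X g
      \<and> (\<forall>n. \<forall>x\<in>simp X n. g n (f n x) = x)
      \<and> (\<forall>n. \<forall>y\<in>simp Y n. f n (g n y) = y))"

definition reduced :: "'s sset \<Rightarrow> bool" where
  "reduced X \<longleftrightarrow> (\<exists>v. simp X 0 = {v})"

definition sset_unit :: "'s sset \<Rightarrow> 's" where
  "sset_unit X = degen X 0 0 (THE v. simp X 0 = {v})"

fun drop_last :: "'s sset \<Rightarrow> nat \<Rightarrow> nat \<Rightarrow> 's \<Rightarrow> 's" where
  "drop_last X 0 m x = x"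
| "drop_last X (Suc k) m x = drop_last X k (m - 1) (face X m m x)"

fun drop_first :: "'s sset \<Rightarrow> nat \<Rightarrow> nat \<Rightarrow> 's \<Rightarrow> 's" where
  "drop_first X 0 m x = x"
| "drop_first X (Suc k) m x = drop_first X k (m - 1) (face X m 0 x)"

fun drop_second :: "'s sset \<Rightarrow> nat \<Rightarrow> nat \<Rightarrow> 's \<Rightarrow> 's" where
  "drop_second X 0 m x = x"
| "drop_second X (Suc k) m x = drop_second X k (m - 1) (face X m 1 x)"

text \<open>The edge from vertex j to vertex j+1 of an n-simplex (j < n).\<close>
definition edge :: "'s sset \<Rightarrow> nat \<Rightarrow> 's \<Rightarrow> nat \<Rightarrow> 's" where
  "edge X n x j = drop_first X j (Suc j) (drop_last X (n - Suc j) n x)"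

definition enum :: "'s sset \<Rightarrow> nat \<Rightarrow> 's \<Rightarrow> 's list" where
  "enum X n x = map (edge X n x) [0..<n]"

definition N_sset :: "'s sset \<Rightarrow> bool" where
  "N_sset X \<longleftrightarrow> (\<forall>n. inj_on (enum X n) (simp X n))"

text \<open>Product operator: the edge from vertex 0 to vertex n.\<close>
definition prod_op :: "'s sset \<Rightarrow> nat \<Rightarrow> 's \<Rightarrow> 's" where
  "prod_op X n x = (if n = 0 then degen X 0 0 x else drop_second X (n - 1) n x)"

definition opposite :: "'s sset \<Rightarrow> 's sset" where
  "opposite X = \<lparr> simp = simp X, face = (\<lambda>n i. face X n (n - i)),
                  degen = (\<lambda>n i. degen X n (n - i)) \<rparr>"

definition inversion :: "'s sset \<Rightarrow> (nat \<Rightarrow> 's \<Rightarrow> 's) \<Rightarrow> bool" where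
  "inversion X \<nu> \<longleftrightarrow>
     sset_map X (opposite X) \<nu>
   \<and> (\<forall>n. \<forall>x\<in>simp X n. \<nu> n (\<nu> n x) = x)
   \<and> (\<forall>n. \<forall>x\<in>simp X n. 1 \<le> n \<longrightarrow>
        (\<exists>y\<in>simp X (2 * n). enum X (2 * n) y = enum X n (\<nu> n x) @ enum X n x
            \<and> prod_op X (2 * n) y = sset_unit X))"

definition red_N_inv_sset :: "'s sset \<Rightarrow> bool" where
  "red_N_inv_sset X \<longleftrightarrow> is_sset X \<and> reduced X \<and> N_sset X \<and> (\<exists>\<nu>. inversion X \<nu>)"

definition nerve :: "('a, 'z) partial_group_scheme \<Rightarrow> 'a list sset" where
  "nerve M = \<lparr> simp = (\<lambda>n. {w \<in> pg_dom M. length w = n}),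
     face = (\<lambda>n i w. if i = 0 then tl w else if i = n then butlast w
                     else take (i - 1) w @ [pg_prod M [w ! (i - 1), w ! i]] @ drop (Suc i) w),
     degen = (\<lambda>n i w. take i w @ [pg_unit M] @ drop i w) \<rparr>"

definition nerve_map :: "('a \<Rightarrow> 'b) \<Rightarrow> nat \<Rightarrow> 'a list \<Rightarrow> 'b list" where
  "nerve_map \<beta> n w = map \<beta> w"

end

theory Submission
  imports Defs
begin

definition sub :: "'s sset \<Rightarrow> nat \<Rightarrow> 's \<Rightarrow> nat \<Rightarrow> nat \<Rightarrow> 's" where
  "sub X n x a b = drop_first X a b (drop_last X (n - b) n x)"

lemma edge_sub: "edge X n x j = sub X n x j (Suc j)"
  by (simp add: edge_def sub_def)

lemma L_add: "drop_last X (k + l) m x = drop_last X k (m - l) (drop_last X l m x)"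
proof (induction l arbitrary: m x)
  case 0 show ?case by simp
next
  case (Suc l)
  have "drop_last X (k + Suc l) m x = drop_last X (Suc (k + l)) m x" by simp
  also have "\<dots> = drop_last X (k + l) (m - 1) (face X m m x)" by (rule drop_last.simps)
  also have "\<dots> = drop_last X k (m - 1 - l) (drop_last X l (m - 1) (face X m m x))" by (rule Suc.IH)
  also have "\<dots> = drop_last X k (m - Suc l) (drop_last X (Suc l) m x)" by simp
  finally show ?case .
qed

lemma F_add: "drop_first X (k + l) m x = drop_first X k (m - l) (drop_first X l m x)"
proof (induction l arbitrary: m x)
  case 0 show ?case by simp
next
  case (Suc l)
  have "drop_first X (k + Suc l) m x = drop_first X (Suc (k + l)) m x" by simp
  also have "\<dots> = drop_first X (k + l) (m - 1) (face X m 0 x)" by (rule drop_first.simps)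
  also have "\<dots> = drop_first X k (m - 1 - l) (drop_first X l (m - 1) (face X m 0 x))" by (rule Suc.IH)
  also have "\<dots> = drop_first X k (m - Suc l) (drop_first X (Suc l) m x)" by simp
  finally show ?case .
qed

lemma S_add: "drop_second X (k + l) m x = drop_second X k (m - l) (drop_second X l m x)"
proof (induction l arbitrary: m x)
  case 0 show ?case by simp
next
  case (Suc l)
  have "drop_second X (k + Suc l) m x = drop_second X (Suc (k + l)) m x" by simp
  also have "\<dots> = drop_second X (k + l) (m - 1) (face X m 1 x)" by (rule drop_second.simps)
  also have "\<dots> = drop_second X k (m - 1 - l) (drop_second X l (m - 1) (face X m 1 x))" by (rule Suc.IH)
  also have "\<dots> = drop_second X k (m - Suc l) (drop_second X (Suc l) m x)" by simp
  finally show ?case .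
qed

lemma L_snoc: "drop_last X (Suc k) m x = face X (m - k) (m - k) (drop_last X k m x)"
  using L_add[of X 1 k m x] by simp

lemma F_snoc: "drop_first X (Suc k) m x = face X (m - k) 0 (drop_first X k m x)"
  using F_add[of X 1 k m x] by simp

locale ss =
  fixes X :: "'s sset"
  assumes ss: "is_sset X"
begin

lemma face_simp': "x \<in> simp X n \<Longrightarrow> 1 \<le> n \<Longrightarrow> i \<le> n \<Longrightarrow> face X n i x \<in> simp X (n - 1)"
  using ss[unfolded is_sset_def, THEN conjunct1] by blast

lemma face_simp: "x \<in> simp X (Suc n) \<Longrightarrow> i \<le> Suc n \<Longrightarrow> face X (Suc n) i x \<in> simp X n"
  using face_simp'[of x "Suc n" i] by simp

lemma degen_simp: "x \<in> simp X n \<Longrightarrow> i \<le> n \<Longrightarrow> degen X n i x \<in> simp X (Suc n)"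
  using ss[unfolded is_sset_def, THEN conjunct2, THEN conjunct1] by blast

lemma ff: "x \<in> simp X n \<Longrightarrow> 2 \<le> n \<Longrightarrow> i < j \<Longrightarrow> j \<le> n \<Longrightarrow>
   face X (n - 1) i (face X n j x) = face X (n - 1) (j - 1) (face X n i x)"
  using ss[unfolded is_sset_def, THEN conjunct2, THEN conjunct2, THEN conjunct1] by blast

lemma fd_lt: "x \<in> simp X n \<Longrightarrow> i < j \<Longrightarrow> j \<le> n \<Longrightarrow>
   face X (Suc n) i (degen X n j x) = degen X (n - 1) (j - 1) (face X n i x)"
  using ss[unfolded is_sset_def, THEN conjunct2, THEN conjunct2, THEN conjunct2, THEN conjunct1] by blast

lemma fd_eq1: "x \<in> simp X n \<Longrightarrow> j \<le> n \<Longrightarrow> face X (Suc n) j (degen X n j x) = x"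
  using ss[unfolded is_sset_def, THEN conjunct2, THEN conjunct2, THEN conjunct2, THEN conjunct2, THEN conjunct1] by blast

lemma fd_eq2: "x \<in> simp X n \<Longrightarrow> j \<le> n \<Longrightarrow> face X (Suc n) (Suc j) (degen X n j x) = x"
  using ss[unfolded is_sset_def, THEN conjunct2, THEN conjunct2, THEN conjunct2, THEN conjunct2, THEN conjunct1] by blast

lemma fd_gt: "x \<in> simp X n \<Longrightarrow> Suc j < i \<Longrightarrow> i \<le> Suc n \<Longrightarrow>
   face X (Suc n) i (degen X n j x) = degen X (n - 1) j (face X n (i - 1) x)"
  using ss[unfolded is_sset_def, THEN conjunct2, THEN conjunct2, THEN conjunct2, THEN conjunct2, THEN conjunct2, THEN conjunct1] by blast

lemma dd: "x \<in> simp X n \<Longrightarrow> i \<le> j \<Longrightarrow> j \<le> n \<Longrightarrow>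
   degen X (Suc n) i (degen X n j x) = degen X (Suc n) (Suc j) (degen X n i x)"
  using ss[unfolded is_sset_def, THEN conjunct2, THEN conjunct2, THEN conjunct2, THEN conjunct2, THEN conjunct2, THEN conjunct2] by blast

lemma L_simp: "x \<in> simp X m \<Longrightarrow> k \<le> m \<Longrightarrow> drop_last X k m x \<in> simp X (m - k)"
proof (induction k arbitrary: m x)
  case (Suc k)
  then obtain m' where m: "m = Suc m'" by (cases m) auto
  have "face X m m x \<in> simp X m'" using Suc.prems m face_simp by auto
  then show ?case using Suc m by auto
qed simp

lemma F_simp: "x \<in> simp X m \<Longrightarrow> k \<le> m \<Longrightarrow> drop_first X k m x \<in> simp X (m - k)"
proof (induction k arbitrary: m x)
  case (Suc k)
  then obtain m' where m: "m = Suc m'" by (cases m) auto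
  have "face X m 0 x \<in> simp X m'" using Suc.prems m face_simp by auto
  then show ?case using Suc m by auto
qed simp

lemma S_simp: "x \<in> simp X m \<Longrightarrow> k < m \<Longrightarrow> drop_second X k m x \<in> simp X (m - k)"
proof (induction k arbitrary: m x)
  case (Suc k)
  then obtain m' where m: "m = Suc m'" by (cases m) auto
  have "face X m 1 x \<in> simp X m'" using Suc.prems m face_simp by auto
  then show ?case using Suc m by auto
qed simp

lemma sub_simp: "x \<in> simp X n \<Longrightarrow> a \<le> b \<Longrightarrow> b \<le> n \<Longrightarrow> sub X n x a b \<in> simp X (b - a)"
  unfolding sub_def using L_simp F_simp
  by (metis diff_diff_cancel diff_le_self)

lemma L1F: "x \<in> simp X m \<Longrightarrow> Suc a \<le> m \<Longrightarrow>
   drop_first X a (m - 1) (face X m m x) = face X (m - a) (m - a) (drop_first X a m x)"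
proof (induction a arbitrary: m x)
  case 0
  then show ?case by simp
next
  case (Suc a)
  then obtain p where m: "m = Suc (Suc p)" by (cases m; cases "m - 1") auto
  have x: "x \<in> simp X (Suc (Suc p))" using Suc.prems m by simp
  have "drop_first X (Suc a) (m - 1) (face X m m x)
      = drop_first X a p (face X (Suc p) 0 (face X (Suc (Suc p)) (Suc (Suc p)) x))"
    using m by simp
  also have "face X (Suc p) 0 (face X (Suc (Suc p)) (Suc (Suc p)) x)
      = face X (Suc p) (Suc p) (face X (Suc (Suc p)) 0 x)"
    using ff[OF x, of 0 "Suc (Suc p)"] by simp
  also have "drop_first X a p (face X (Suc p) (Suc p) (face X (Suc (Suc p)) 0 x))
      = face X (Suc p - a) (Suc p - a) (drop_first X a (Suc p) (face X (Suc (Suc p)) 0 x))"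
    using Suc.IH[of "face X (Suc (Suc p)) 0 x" "Suc p"] Suc.prems m face_simp[OF x, of 0]
    by simp
  finally show ?case using m by simp
qed

lemma FL: "x \<in> simp X m \<Longrightarrow> a + k \<le> m \<Longrightarrow>
   drop_first X a (m - k) (drop_last X k m x) = drop_last X k (m - a) (drop_first X a m x)"
proof (induction k arbitrary: m x)
  case 0
  then show ?case by simp
next
  case (Suc k)
  then obtain p where m: "m = Suc p" by (cases m) auto
  have x: "x \<in> simp X (Suc p)" using Suc.prems m by simp
  have "drop_first X a (m - Suc k) (drop_last X (Suc k) m x)
      = drop_first X a (p - k) (drop_last X k p (face X (Suc p) (Suc p) x))" using m by simp
  also have "\<dots> = drop_last X k (p - a) (drop_first X a p (face X (Suc p) (Suc p) x))"
    using Suc.IH[of "face X (Suc p) (Suc p) x" p] Suc.prems m face_simp[OF x, of "Suc p"] by simp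
  also have "drop_first X a p (face X (Suc p) (Suc p) x)
       = face X (Suc p - a) (Suc p - a) (drop_first X a (Suc p) x)"
    using L1F[OF x, of a] Suc.prems m by simp
  also have "drop_last X k (p - a) (face X (Suc p - a) (Suc p - a) (drop_first X a (Suc p) x))
       = drop_last X (Suc k) (m - a) (drop_first X a m x)"
    using m Suc.prems by (simp add: Suc_diff_le)
  finally show ?case .
qed

lemma sub_sub:
  assumes x: "x \<in> simp X n" and ab: "a \<le> b" "b \<le> n" and cd: "c \<le> d" "d \<le> b - a"
  shows "sub X (b - a) (sub X n x a b) c d = sub X n x (a + c) (a + d)"
proof -
  let ?y = "drop_last X (n - b) n x"
  have y: "?y \<in> simp X b" using L_simp[OF x, of "n - b"] ab by simp
  have "drop_last X (b - a - d) (b - a) (drop_first X a b ?y)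
       = drop_first X a (b - (b - a - d)) (drop_last X (b - a - d) b ?y)"
    using FL[OF y, of a "b - a - d"] ab cd by simp
  also have "b - (b - a - d) = a + d" using ab cd by simp
  finally have 1: "drop_last X (b - a - d) (b - a) (drop_first X a b ?y)
       = drop_first X a (a + d) (drop_last X (b - a - d) b ?y)" .
  have 2: "drop_first X c d (drop_first X a (a + d) z) = drop_first X (c + a) (a + d) z" for z
    using F_add[of X c a "a + d" z] by simp
  have 3: "drop_last X (b - a - d) b ?y = drop_last X (n - (a + d)) n x"
    using L_add[of X "b - a - d" "n - b" n x] ab cd by (simp add: add.commute)
  show ?thesis unfolding sub_def using 1 2 3 ab cd by (simp add: add.commute)
qed

lemma enum_length[simp]: "length (enum X n x) = n"
  by (simp add: enum_def)

lemma enum_nth: "j < n \<Longrightarrow> enum X n x ! j = sub X n x j (Suc j)"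
  by (simp add: enum_def edge_sub)

lemma enum_sub:
  assumes x: "x \<in> simp X n" and ab: "a \<le> b" "b \<le> n"
  shows "enum X (b - a) (sub X n x a b) = take (b - a) (drop a (enum X n x))"
proof (rule nth_equalityI)
  show "length (enum X (b - a) (sub X n x a b)) = length (take (b - a) (drop a (enum X n x)))"
    using ab by simp
  fix j assume "j < length (enum X (b - a) (sub X n x a b))"
  then have j: "j < b - a" by simp
  have "enum X (b - a) (sub X n x a b) ! j = sub X (b - a) (sub X n x a b) j (Suc j)"
    using j enum_nth by blast
  also have "\<dots> = sub X n x (a + j) (a + Suc j)" using sub_sub[OF x ab, of j "Suc j"] j by simp
  also have "\<dots> = enum X n x ! (a + j)" using enum_nth[of "a + j" n x] j ab by simp
  finally show "enum X (b - a) (sub X n x a b) ! j = take (b - a) (drop a (enum X n x)) ! j"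
    using j ab by simp
qed

lemma enum_simp:
  assumes x: "x \<in> simp X n" shows "set (enum X n x) \<subseteq> simp X 1"
proof
  fix e assume "e \<in> set (enum X n x)"
  then obtain j where j: "j < n" and e: "e = enum X n x ! j"
    by (metis enum_length in_set_conv_nth)
  have "sub X n x j (Suc j) \<in> simp X (Suc j - j)" using sub_simp[OF x, of j "Suc j"] j by simp
  then show "e \<in> simp X 1" using enum_nth[OF j] e by simp
qed

end

context ss begin

lemma LD:
  assumes x: "x \<in> simp X n" and i: "i \<le> n"
  shows "k < n \<Longrightarrow> drop_last X k (n - 1) (face X n i x) =
    (if i + k < n then face X (n - k) i (drop_last X k n x) else drop_last X (Suc k) n x)"
proof (induction k)
  case 0
  show ?case
  proof (cases "i < n")
    case True then show ?thesis by simp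
  next
    case False then have "i = n" using i by simp
    then show ?thesis by simp
  qed
next
  case (Suc k)
  have IH: "drop_last X k (n - 1) (face X n i x) =
    (if i + k < n then face X (n - k) i (drop_last X k n x) else drop_last X (Suc k) n x)"
    using Suc by simp
  have snoc: "drop_last X (Suc k) (n - 1) (face X n i x)
     = face X (n - 1 - k) (n - 1 - k) (drop_last X k (n - 1) (face X n i x))"
    by (rule L_snoc)
  show ?case
  proof (cases "i + k < n")
    case True
    let ?z = "drop_last X k n x"
    have z: "?z \<in> simp X (n - k)" using L_simp[OF x, of k] Suc by simp
    have n2: "2 \<le> n - k" using Suc by simp
    have ffz: "face X (n - k - 1) i (face X (n - k) (n - k) ?z) = face X (n - k - 1) (n - k - 1) (face X (n - k) i ?z)"
      if "i < n - k" using ff[OF z n2 that] by simp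
    have sn: "drop_last X (Suc k) n x = face X (n - k) (n - k) ?z" by (rule L_snoc)
    show ?thesis
    proof (cases "i + Suc k < n")
      case True
      then show ?thesis using snoc IH \<open>i + k < n\<close> ffz sn by (simp add: diff_diff_left)
    next
      case False
      then have ieq: "i = n - k - 1" using \<open>i + k < n\<close> by simp
      have sn2: "drop_last X (Suc (Suc k)) n x = face X (n - Suc k) (n - Suc k) (drop_last X (Suc k) n x)"
        by (rule L_snoc)
      show ?thesis using snoc IH \<open>i + k < n\<close> False sn sn2 ffz[unfolded ieq] ieq
        by (simp add: diff_diff_left)
    qed
  next
    case False
    have sn2: "drop_last X (Suc (Suc k)) n x = face X (n - Suc k) (n - Suc k) (drop_last X (Suc k) n x)"
      by (rule L_snoc)
    show ?thesis using snoc IH False sn2 by (simp add: diff_diff_left)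
  qed
qed

lemma FD:
  assumes x: "x \<in> simp X n" and i: "i \<le> n"
  shows "a < n \<Longrightarrow> drop_first X a (n - 1) (face X n i x) =
    (if a < i then face X (n - a) (i - a) (drop_first X a n x) else drop_first X (Suc a) n x)"
proof (induction a)
  case 0
  show ?case
  proof (cases "0 < i")
    case True then show ?thesis by simp
  next
    case False then have "i = 0" by simp
    then show ?thesis by simp
  qed
next
  case (Suc a)
  have IH: "drop_first X a (n - 1) (face X n i x) =
    (if a < i then face X (n - a) (i - a) (drop_first X a n x) else drop_first X (Suc a) n x)"
    using Suc by simp
  have snoc: "drop_first X (Suc a) (n - 1) (face X n i x)
     = face X (n - 1 - a) 0 (drop_first X a (n - 1) (face X n i x))"
    by (rule F_snoc)
  have sn2: "drop_first X (Suc (Suc a)) n x = face X (n - Suc a) 0 (drop_first X (Suc a) n x)"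
    by (rule F_snoc)
  show ?case
  proof (cases "a < i")
    case True
    let ?z = "drop_first X a n x"
    have z: "?z \<in> simp X (n - a)" using F_simp[OF x, of a] Suc by simp
    have n2: "2 \<le> n - a" using Suc by simp
    have ffz: "face X (n - a - 1) 0 (face X (n - a) (i - a) ?z) = face X (n - a - 1) (i - a - 1) (face X (n - a) 0 ?z)"
      using ff[OF z n2, of 0 "i - a"] True i by simp
    have sn: "drop_first X (Suc a) n x = face X (n - a) 0 ?z" by (rule F_snoc)
    show ?thesis
    proof (cases "Suc a < i")
      case True
      then show ?thesis using snoc IH \<open>a < i\<close> ffz sn by (simp add: diff_diff_left)
    next
      case False
      then have ieq: "i - a - 1 = 0" using \<open>a < i\<close> by simp
      show ?thesis using snoc IH \<open>a < i\<close> False sn sn2 ffz ieq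
        by (simp add: diff_diff_left)
    qed
  next
    case False
    show ?thesis using snoc IH False sn2 by (simp add: diff_diff_left)
  qed
qed

lemma SUBD:
  assumes x: "x \<in> simp X n" and i: "i \<le> n" and ab: "a \<le> b" "b < n"
  shows "sub X (n - 1) (face X n i x) a b =
    (if b < i then sub X n x a b else if i \<le> a then sub X n x (Suc a) (Suc b)
     else face X (Suc b - a) (i - a) (sub X n x a (Suc b)))"
proof -
  have L: "drop_last X (n - 1 - b) (n - 1) (face X n i x) =
    (if i + (n - 1 - b) < n then face X (n - (n - 1 - b)) i (drop_last X (n - 1 - b) n x)
     else drop_last X (Suc (n - 1 - b)) n x)"
    using LD[OF x i, of "n - 1 - b"] ab by simp
  show ?thesis
  proof (cases "b < i")
    case True
    then have "\<not> i + (n - 1 - b) < n" using ab by simp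
    then have "drop_last X (n - 1 - b) (n - 1) (face X n i x) = drop_last X (Suc (n - 1 - b)) n x"
      using L by simp
    also have "Suc (n - 1 - b) = n - b" using ab by simp
    finally have "drop_last X (n - 1 - b) (n - 1) (face X n i x) = drop_last X (n - b) n x" .
    then show ?thesis using True unfolding sub_def by simp
  next
    case False
    let ?y = "drop_last X (n - Suc b) n x"
    have y: "?y \<in> simp X (Suc b)" using L_simp[OF x, of "n - Suc b"] ab by simp
    have c: "i + (n - 1 - b) < n" using ab False by simp
    have "n - (n - 1 - b) = Suc b" "n - 1 - b = n - Suc b" using ab by auto
    then have "drop_last X (n - 1 - b) (n - 1) (face X n i x) = face X (Suc b) i ?y"
      using L c by simp
    then have e: "sub X (n - 1) (face X n i x) a b = drop_first X a b (face X (Suc b) i ?y)"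
      unfolding sub_def by simp
    have F: "drop_first X a b (face X (Suc b) i ?y) =
      (if a < i then face X (Suc b - a) (i - a) (drop_first X a (Suc b) ?y) else drop_first X (Suc a) (Suc b) ?y)"
      using FD[OF y, of i a] False ab by simp
    show ?thesis using e F False unfolding sub_def by auto
  qed
qed

lemma enum_face:
  assumes x: "x \<in> simp X n" and i: "i \<le> n" and j: "Suc j < n"
  shows "enum X (n - 1) (face X n i x) ! j =
    (if Suc j < i then enum X n x ! j else if i \<le> j then enum X n x ! (Suc j)
     else face X 2 1 (sub X n x j (Suc (Suc j))))"
proof -
  have "enum X (n - 1) (face X n i x) ! j = sub X (n - 1) (face X n i x) j (Suc j)"
    using enum_nth j by simp
  also have "\<dots> = (if Suc j < i then sub X n x j (Suc j) else if i \<le> j then sub X n x (Suc j) (Suc (Suc j))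
     else face X (Suc (Suc j) - j) (i - j) (sub X n x j (Suc (Suc j))))"
    using SUBD[OF x i, of j "Suc j"] j by simp
  moreover have "\<not> Suc j < i \<Longrightarrow> \<not> i \<le> j \<Longrightarrow> i - j = 1" by simp
  ultimately show ?thesis using enum_nth[of j n x] enum_nth[of "Suc j" n x] j
    by (auto simp: numeral_2_eq_2)
qed

lemma LS:
  assumes x: "x \<in> simp X n" and i: "i \<le> n"
  shows "k \<le> n \<Longrightarrow> drop_last X k (Suc n) (degen X n i x) =
    (if k + i \<le> n then degen X (n - k) i (drop_last X k n x) else drop_last X (k - 1) n x)"
proof (induction k)
  case 0
  then show ?case using i by simp
next
  case (Suc k)
  have IH: "drop_last X k (Suc n) (degen X n i x) =
    (if k + i \<le> n then degen X (n - k) i (drop_last X k n x) else drop_last X (k - 1) n x)"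
    using Suc by simp
  have snoc: "drop_last X (Suc k) (Suc n) (degen X n i x)
     = face X (Suc n - k) (Suc n - k) (drop_last X k (Suc n) (degen X n i x))"
    by (rule L_snoc)
  show ?case
  proof (cases "k + i \<le> n")
    case True
    let ?z = "drop_last X k n x"
    have z: "?z \<in> simp X (n - k)" using L_simp[OF x, of k] Suc by simp
    have e1: "Suc n - k = Suc (n - k)" using Suc by simp
    show ?thesis
    proof (cases "Suc k + i \<le> n")
      case True
      have "face X (Suc (n - k)) (Suc (n - k)) (degen X (n - k) i ?z) = degen X (n - k - 1) i (face X (n - k) (Suc (n - k) - 1) ?z)"
        using fd_gt[OF z, of i "Suc (n - k)"] True by simp
      moreover have "drop_last X (Suc k) n x = face X (n - k) (n - k) ?z" by (rule L_snoc)
      ultimately show ?thesis using snoc IH True \<open>k + i \<le> n\<close> e1 by (simp add: diff_diff_left)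
    next
      case False
      then have ie: "n - k = i" using \<open>k + i \<le> n\<close> by simp
      have "face X (Suc (n - k)) (Suc (n - k)) (degen X (n - k) i ?z) = ?z"
        using fd_eq2[OF z, of i] ie by simp
      then show ?thesis using snoc IH False \<open>k + i \<le> n\<close> e1 by simp
    qed
  next
    case False
    then have k1: "1 \<le> k" using i by simp
    have "drop_last X (Suc (k - 1)) n x = face X (n - (k - 1)) (n - (k - 1)) (drop_last X (k - 1) n x)"
      by (rule L_snoc)
    moreover have "Suc (k - 1) = k" "n - (k - 1) = Suc n - k" using k1 Suc by auto
    ultimately show ?thesis using snoc IH False by simp
  qed
qed

lemma FS:
  assumes x: "x \<in> simp X m" and i: "i \<le> m"
  shows "a \<le> m \<Longrightarrow> drop_first X a (Suc m) (degen X m i x) =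
    (if a \<le> i then degen X (m - a) (i - a) (drop_first X a m x) else drop_first X (a - 1) m x)"
proof (induction a)
  case 0
  then show ?case by simp
next
  case (Suc a)
  have IH: "drop_first X a (Suc m) (degen X m i x) =
    (if a \<le> i then degen X (m - a) (i - a) (drop_first X a m x) else drop_first X (a - 1) m x)"
    using Suc by simp
  have snoc: "drop_first X (Suc a) (Suc m) (degen X m i x)
     = face X (Suc m - a) 0 (drop_first X a (Suc m) (degen X m i x))"
    by (rule F_snoc)
  show ?case
  proof (cases "a \<le> i")
    case True
    let ?z = "drop_first X a m x"
    have z: "?z \<in> simp X (m - a)" using F_simp[OF x, of a] Suc by simp
    have e1: "Suc m - a = Suc (m - a)" using Suc by simp
    show ?thesis
    proof (cases "a < i")
      case True
      have "face X (Suc (m - a)) 0 (degen X (m - a) (i - a) ?z) = degen X (m - a - 1) (i - a - 1) (face X (m - a) 0 ?z)"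
        using fd_lt[OF z, of 0 "i - a"] True i by simp
      moreover have "drop_first X (Suc a) m x = face X (m - a) 0 ?z" by (rule F_snoc)
      ultimately show ?thesis using snoc IH True e1 by (simp add: diff_diff_left)
    next
      case False
      then have ie: "i - a = 0" "a = i" using \<open>a \<le> i\<close> by auto
      have "face X (Suc (m - a)) 0 (degen X (m - a) 0 ?z) = ?z"
        using fd_eq1[OF z, of 0] by simp
      then show ?thesis using snoc IH False \<open>a \<le> i\<close> e1 ie by simp
    qed
  next
    case False
    then have k1: "1 \<le> a" by simp
    have "drop_first X (Suc (a - 1)) m x = face X (m - (a - 1)) 0 (drop_first X (a - 1) m x)"
      by (rule F_snoc)
    moreover have "Suc (a - 1) = a" "m - (a - 1) = Suc m - a" using k1 Suc by auto
    ultimately show ?thesis using snoc IH False by simp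
  qed
qed

lemma enum_degen:
  assumes x: "x \<in> simp X n" and i: "i \<le> n" and j: "j \<le> n"
  shows "enum X (Suc n) (degen X n i x) ! j =
    (if j < i then enum X n x ! j else if j = i then degen X 0 0 (sub X n x j j)
     else enum X n x ! (j - 1))"
proof -
  have "enum X (Suc n) (degen X n i x) ! j = drop_first X j (Suc j) (drop_last X (n - j) (Suc n) (degen X n i x))"
    using enum_nth[of j "Suc n"] j unfolding sub_def by simp
  also have "drop_last X (n - j) (Suc n) (degen X n i x) =
    (if n - j + i \<le> n then degen X (n - (n - j)) i (drop_last X (n - j) n x) else drop_last X (n - j - 1) n x)"
    using LS[OF x i, of "n - j"] by simp
  finally have e: "enum X (Suc n) (degen X n i x) ! j = drop_first X j (Suc j)
    (if n - j + i \<le> n then degen X (n - (n - j)) i (drop_last X (n - j) n x) else drop_last X (n - j - 1) n x)" .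
  show ?thesis
  proof (cases "j < i")
    case True
    then have "\<not> n - j + i \<le> n" using i j by simp
    then show ?thesis using e True enum_nth[of j n x] j i unfolding sub_def by (simp add: diff_diff_left)
  next
    case False
    let ?y = "drop_last X (n - j) n x"
    have y: "?y \<in> simp X j" using L_simp[OF x, of "n - j"] j by simp
    have c: "n - j + i \<le> n" "n - (n - j) = j" using False j by auto
    have F: "drop_first X j (Suc j) (degen X j i ?y) =
      (if j \<le> i then degen X (j - j) (i - j) (drop_first X j j ?y) else drop_first X (j - 1) j ?y)"
      using FS[OF y, of i j] False by simp
    show ?thesis
    proof (cases "j = i")
      case True
      then show ?thesis using e c F unfolding sub_def by simp
    next
      case False
      then have "j - 1 < n" "Suc (j - 1) = j" using \<open>\<not> j < i\<close> j by auto
      then show ?thesis using e c F False \<open>\<not> j < i\<close> enum_nth[of "j - 1" n x] unfolding sub_def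
        by simp
    qed
  qed
qed

lemma DS_face:
  "x \<in> simp X (Suc m) \<Longrightarrow> 1 \<le> i \<Longrightarrow> i \<le> m \<Longrightarrow> i - 1 \<le> k \<Longrightarrow> k < m \<Longrightarrow>
   drop_second X k m (face X (Suc m) i x) = drop_second X (Suc k) (Suc m) x"
proof (induction k arbitrary: i x m)
  case 0
  then have "i = 1" by simp
  then show ?case by simp
next
  case (Suc k)
  show ?case
  proof (cases "i = 1")
    case True
    then show ?thesis by simp
  next
    case False
    then have i2: "2 \<le> i" using Suc by simp
    obtain p where m: "m = Suc p" using Suc by (cases m) auto
    have "face X m 1 (face X (Suc m) i x) = face X m (i - 1) (face X (Suc m) 1 x)"
      using ff[OF Suc.prems(1), of 1 i] i2 Suc.prems by simp
    moreover have "drop_second X k p (face X (Suc p) (i - 1) (face X (Suc m) 1 x))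
        = drop_second X (Suc k) (Suc p) (face X (Suc m) 1 x)"
      using Suc.IH[where i="i - 1" and x="face X (Suc m) 1 x" and m=p] face_simp[OF Suc.prems(1), of 1] Suc.prems i2 m
      by simp
    ultimately show ?thesis using m by simp
  qed
qed

lemma DS_degen:
  "x \<in> simp X m \<Longrightarrow> i \<le> m \<Longrightarrow> 1 \<le> m \<Longrightarrow> i \<le> Suc k \<Longrightarrow> k < m \<Longrightarrow>
   drop_second X (Suc k) (Suc m) (degen X m i x) = drop_second X k m x"
proof (induction k arbitrary: i x m)
  case 0
  then have "i = 0 \<or> i = 1" by auto
  then show ?case
  proof
    assume "i = 0" then show ?thesis using fd_eq2[OF 0(1), of 0] by simp
  next
    assume "i = 1" then show ?thesis using fd_eq1[OF 0(1), of 1] 0 by simp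
  qed
next
  case (Suc k)
  show ?case
  proof (cases "i \<le> 1")
    case True
    then have "i = 0 \<or> i = 1" by auto
    then have "face X (Suc m) 1 (degen X m i x) = x"
      using fd_eq2[OF Suc.prems(1), of 0] fd_eq1[OF Suc.prems(1), of 1] Suc.prems by auto
    then show ?thesis by simp
  next
    case False
    obtain p where m: "m = Suc p" using Suc by (cases m) auto
    have "face X (Suc m) 1 (degen X m i x) = degen X p (i - 1) (face X m 1 x)"
      using fd_lt[OF Suc.prems(1), of 1 i] False Suc.prems m by simp
    moreover have "drop_second X (Suc k) (Suc p) (degen X p (i - 1) (face X m 1 x))
       = drop_second X k p (face X m 1 x)"
      using Suc.IH[where i="i - 1" and x="face X m 1 x" and m=p] face_simp[of x p 1] Suc.prems m False by simp
    ultimately show ?thesis using m by simp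
  qed
qed

lemma prod_one[simp]: "prod_op X 1 x = x"
  by (simp add: prod_op_def)

lemma prod_two: "prod_op X 2 z = face X 2 1 z"
  by (simp add: prod_op_def numeral_2_eq_2)

lemma prod_d1: "prod_op X (Suc k) (face X (Suc (Suc k)) 1 z) = prod_op X (Suc (Suc k)) z"
  by (simp add: prod_op_def)

lemma prod_simp: "x \<in> simp X n \<Longrightarrow> prod_op X n x \<in> simp X 1"
  using S_simp[of x n "n - 1"] degen_simp[of x 0 0] by (auto simp: prod_op_def)

lemma prod_face: "x \<in> simp X n \<Longrightarrow> 0 < i \<Longrightarrow> i < n \<Longrightarrow> prod_op X (n - 1) (face X n i x) = prod_op X n x"
proof -
  assume x: "x \<in> simp X n" and i: "0 < i" "i < n"
  then obtain p where n: "n = Suc (Suc p)" by (cases n; cases "n - 1") auto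
  have "drop_second X p (Suc p) (face X (Suc (Suc p)) i x) = drop_second X (Suc p) (Suc (Suc p)) x"
    using DS_face[of x "Suc p" i p] x i n by simp
  then show ?thesis using n by (simp add: prod_op_def)
qed

lemma prod_degen: "x \<in> simp X n \<Longrightarrow> i \<le> n \<Longrightarrow> prod_op X (Suc n) (degen X n i x) = prod_op X n x"
proof -
  assume x: "x \<in> simp X n" and i: "i \<le> n"
  show ?thesis
  proof (cases n)
    case 0
    then show ?thesis using i by (simp add: prod_op_def)
  next
    case (Suc p)
    have "drop_second X (Suc p) (Suc (Suc p)) (degen X (Suc p) i x) = drop_second X p (Suc p) x"
      using DS_degen[of x "Suc p" i p] x i Suc by simp
    then show ?thesis using Suc by (simp add: prod_op_def)
  qed
qed

end

context ss begin

lemma enum_face_take: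
  assumes x: "x \<in> simp X n" and i: "1 \<le> i" "i \<le> n"
  shows "take (i - 1) (enum X (n - 1) (face X n i x)) = take (i - 1) (enum X n x)"
proof (rule nth_equalityI)
  show "length (take (i - 1) (enum X (n - 1) (face X n i x))) = length (take (i - 1) (enum X n x))"
    using i by simp
  fix j assume "j < length (take (i - 1) (enum X (n - 1) (face X n i x)))"
  then have j: "j < i - 1" "Suc j < n" using i by auto
  then have "Suc j < i" by simp
  then show "take (i - 1) (enum X (n - 1) (face X n i x)) ! j = take (i - 1) (enum X n x) ! j"
    using enum_face[OF x i(2) j(2)] j by simp
qed

lemma enum_face_drop:
  assumes x: "x \<in> simp X n" and i: "i \<le> n"
  shows "drop i (enum X (n - 1) (face X n i x)) = drop (Suc i) (enum X n x)"
proof (rule nth_equalityI)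
  show "length (drop i (enum X (n - 1) (face X n i x))) = length (drop (Suc i) (enum X n x))"
    using i by simp
  fix t assume "t < length (drop i (enum X (n - 1) (face X n i x)))"
  then have t: "Suc (i + t) < n" using i by auto
  show "drop i (enum X (n - 1) (face X n i x)) ! t = drop (Suc i) (enum X n x) ! t"
    using enum_face[OF x i t] t by simp
qed

lemma COLL:
  "x \<in> simp X n \<Longrightarrow> a + k \<le> n \<Longrightarrow> 1 \<le> k \<Longrightarrow>
   \<exists>x'\<in>simp X (n - k + 1). enum X (n - k + 1) x' =
      take a (enum X n x) @ [prod_op X k (sub X n x a (a + k))] @ drop (a + k) (enum X n x)
    \<and> prod_op X (n - k + 1) x' = prod_op X n x"
proof (induction k arbitrary: x n)
  case 0
  then show ?case by simp
next
  case (Suc k)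
  show ?case
  proof (cases "k = 0")
    case True
    have an: "a < n" using Suc True by simp
    have "take a (enum X n x) @ [enum X n x ! a] @ drop (Suc a) (enum X n x) = enum X n x"
      using id_take_nth_drop[of a "enum X n x"] an by simp
    moreover have "enum X n x ! a = sub X n x a (Suc a)" using enum_nth an by simp
    moreover have "prod_op X (Suc 0) (sub X n x a (Suc a)) = sub X n x a (Suc a)"
      by (simp add: prod_op_def)
    ultimately show ?thesis using Suc True an by (intro bexI[of _ x]) auto
  next
    case False
    let ?y = "face X n (Suc a) x"
    have n1: "Suc a < n" using Suc False by simp
    have y: "?y \<in> simp X (n - 1)" using face_simp'[OF Suc.prems(1)] n1 by simp
    obtain x' where x': "x' \<in> simp X (n - 1 - k + 1)"
      and e: "enum X (n - 1 - k + 1) x' =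
        take a (enum X (n - 1) ?y) @ [prod_op X k (sub X (n - 1) ?y a (a + k))] @ drop (a + k) (enum X (n - 1) ?y)"
      and p: "prod_op X (n - 1 - k + 1) x' = prod_op X (n - 1) ?y"
    proof -
      have "a + k \<le> n - 1" "1 \<le> k" using Suc.prems False by auto
      from Suc.IH[OF y this] show ?thesis using that by blast
    qed
    have p2: "prod_op X (n - 1) ?y = prod_op X n x" using prod_face[OF Suc.prems(1)] n1 by simp
    have s: "sub X (n - 1) ?y a (a + k) = face X (Suc k) 1 (sub X n x a (a + Suc k))"
      using SUBD[OF Suc.prems(1), of "Suc a" a "a + k"] n1 False Suc.prems by simp
    obtain k' where k': "k = Suc k'" using False by (cases k) auto
    have ps: "prod_op X k (sub X (n - 1) ?y a (a + k)) = prod_op X (Suc k) (sub X n x a (a + Suc k))"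
      using s prod_d1[of k' "sub X n x a (a + Suc k)"] k' by simp
    have t: "take a (enum X (n - 1) ?y) = take a (enum X n x)"
      using enum_face_take[OF Suc.prems(1), of "Suc a"] n1 by simp
    have "drop (a + k) (enum X (n - 1) ?y) = drop (k - 1) (drop (Suc a) (enum X (n - 1) ?y))"
      using k' by (simp add: add.commute)
    also have "\<dots> = drop (k - 1) (drop (Suc (Suc a)) (enum X n x))"
      using enum_face_drop[OF Suc.prems(1), of "Suc a"] n1 by simp
    also have "\<dots> = drop (a + Suc k) (enum X n x)" using k' by (simp add: add.commute)
    finally have d: "drop (a + k) (enum X (n - 1) ?y) = drop (a + Suc k) (enum X n x)" .
    have dim: "n - 1 - k + 1 = n - Suc k + 1" by simp
    show ?thesis using x' e p p2 ps t d dim by (intro bexI[of _ x']) auto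
  qed
qed

end

context ss begin

lemma map_L:
  assumes f: "sset_map X Y f"
  shows "x \<in> simp X m \<Longrightarrow> k \<le> m \<Longrightarrow> f (m - k) (drop_last X k m x) = drop_last Y k m (f m x)"
proof (induction k arbitrary: m x)
  case 0 then show ?case by simp
next
  case (Suc k)
  then obtain p where m: "m = Suc p" by (cases m) auto
  have "f p (face X m m x) = face Y m m (f m x)"
    using f Suc.prems m unfolding sset_map_def by (metis diff_Suc_1 le_add1 order_refl plus_1_eq_Suc)
  then show ?case using Suc.IH[of "face X m m x" p] Suc.prems face_simp[of x p m] m by simp
qed

lemma map_F:
  assumes f: "sset_map X Y f"
  shows "x \<in> simp X m \<Longrightarrow> k \<le> m \<Longrightarrow> f (m - k) (drop_first X k m x) = drop_first Y k m (f m x)"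
proof (induction k arbitrary: m x)
  case 0 then show ?case by simp
next
  case (Suc k)
  then obtain p where m: "m = Suc p" by (cases m) auto
  have "f p (face X m 0 x) = face Y m 0 (f m x)"
    using f Suc.prems m unfolding sset_map_def by (metis diff_Suc_1 le_add1 le0 plus_1_eq_Suc)
  then show ?case using Suc.IH[of "face X m 0 x" p] Suc.prems face_simp[of x p 0] m by simp
qed

lemma map_S:
  assumes f: "sset_map X Y f"
  shows "x \<in> simp X m \<Longrightarrow> k < m \<Longrightarrow> f (m - k) (drop_second X k m x) = drop_second Y k m (f m x)"
proof (induction k arbitrary: m x)
  case 0 then show ?case by simp
next
  case (Suc k)
  then obtain p where m: "m = Suc p" by (cases m) auto
  have "f p (face X m 1 x) = face Y m 1 (f m x)"
    using f Suc.prems m unfolding sset_map_def by (metis diff_Suc_1 le_add1 le_add_same_cancel1 plus_1_eq_Suc)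
  then show ?case using Suc.IH[of "face X m 1 x" p] Suc.prems face_simp[of x p 1] m by simp
qed

lemma map_sub:
  assumes f: "sset_map X Y f" and x: "x \<in> simp X n" and ab: "a \<le> b" "b \<le> n"
  shows "f (b - a) (sub X n x a b) = sub Y n (f n x) a b"
proof -
  have y: "drop_last X (n - b) n x \<in> simp X b" using L_simp[OF x, of "n - b"] ab by simp
  have "f (b - a) (sub X n x a b) = drop_first Y a b (f b (drop_last X (n - b) n x))"
    unfolding sub_def using map_F[OF f y, of a] ab by simp
  also have "f b (drop_last X (n - b) n x) = drop_last Y (n - b) n (f n x)"
    using map_L[OF f x, of "n - b"] ab by simp
  finally show ?thesis unfolding sub_def .
qed

lemma map_enum:
  assumes f: "sset_map X Y f" and x: "x \<in> simp X n"
  shows "enum Y n (f n x) = map (f 1) (enum X n x)"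
proof (rule nth_equalityI)
  fix j assume "j < length (enum Y n (f n x))"
  then have j: "j < n" by (simp add: enum_def)
  have "enum Y n (f n x) ! j = sub Y n (f n x) j (Suc j)" by (simp add: enum_def edge_sub j)
  also have "\<dots> = f 1 (sub X n x j (Suc j))" using map_sub[OF f x, of j "Suc j"] j by simp
  finally show "enum Y n (f n x) ! j = map (f 1) (enum X n x) ! j" using enum_nth j by simp
qed (simp add: enum_def)

lemma map_prod:
  assumes f: "sset_map X Y f" and x: "x \<in> simp X n"
  shows "f 1 (prod_op X n x) = prod_op Y n (f n x)"
proof (cases n)
  case 0
  then show ?thesis using f x unfolding sset_map_def prod_op_def by simp
next
  case (Suc p)
  then show ?thesis using map_S[OF f x, of p] by (simp add: prod_op_def)
qed

end

locale ssinv = ss +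
  fixes \<nu> :: "nat \<Rightarrow> 's \<Rightarrow> 's"
  assumes nu: "sset_map X (opposite X) \<nu>"
begin

lemma nu_simp: "x \<in> simp X n \<Longrightarrow> \<nu> n x \<in> simp X n"
  using nu unfolding sset_map_def opposite_def by simp

lemma nu_face: "x \<in> simp X n \<Longrightarrow> 1 \<le> n \<Longrightarrow> i \<le> n \<Longrightarrow> \<nu> (n - 1) (face X n i x) = face X n (n - i) (\<nu> n x)"
  using nu unfolding sset_map_def opposite_def by simp

lemma nu_L: "x \<in> simp X m \<Longrightarrow> k \<le> m \<Longrightarrow> \<nu> (m - k) (drop_last X k m x) = drop_first X k m (\<nu> m x)"
proof (induction k arbitrary: m x)
  case 0 then show ?case by simp
next
  case (Suc k)
  then obtain p where m: "m = Suc p" by (cases m) auto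
  have "\<nu> p (face X m m x) = face X m 0 (\<nu> m x)" using nu_face[of x m m] Suc.prems m by simp
  then show ?case using Suc.IH[of "face X m m x" p] Suc.prems face_simp[of x p m] m by simp
qed

lemma nu_F: "x \<in> simp X m \<Longrightarrow> k \<le> m \<Longrightarrow> \<nu> (m - k) (drop_first X k m x) = drop_last X k m (\<nu> m x)"
proof (induction k arbitrary: m x)
  case 0 then show ?case by simp
next
  case (Suc k)
  then obtain p where m: "m = Suc p" by (cases m) auto
  have "\<nu> p (face X m 0 x) = face X m m (\<nu> m x)" using nu_face[of x m 0] Suc.prems m by simp
  then show ?case using Suc.IH[of "face X m 0 x" p] Suc.prems face_simp[of x p 0] m by simp
qed

lemma nu_sub:
  assumes x: "x \<in> simp X n" and ab: "a \<le> b" "b \<le> n"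
  shows "\<nu> (b - a) (sub X n x a b) = sub X n (\<nu> n x) (n - b) (n - a)"
proof -
  have y: "drop_last X (n - b) n x \<in> simp X b" using L_simp[OF x, of "n - b"] ab by simp
  have "\<nu> (b - a) (sub X n x a b) = drop_last X a b (\<nu> b (drop_last X (n - b) n x))"
    unfolding sub_def using nu_F[OF y, of a] ab by simp
  also have "\<nu> b (drop_last X (n - b) n x) = drop_first X (n - b) n (\<nu> n x)"
    using nu_L[OF x, of "n - b"] ab by simp
  also have "drop_last X a b (drop_first X (n - b) n (\<nu> n x))
      = drop_first X (n - b) (n - a) (drop_last X a n (\<nu> n x))"
    using FL[OF nu_simp[OF x], of "n - b" a] ab by simp
  finally show ?thesis unfolding sub_def using ab by simp
qed

lemma enum_nu:
  assumes x: "x \<in> simp X n"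
  shows "enum X n (\<nu> n x) = rev (map (\<nu> 1) (enum X n x))"
proof (rule nth_equalityI)
  fix j assume "j < length (enum X n (\<nu> n x))"
  then have j: "j < n" by simp
  have "rev (map (\<nu> 1) (enum X n x)) ! j = \<nu> 1 (enum X n x ! (n - Suc j))"
    using j by (simp add: rev_nth)
  also have "\<dots> = \<nu> (n - j - (n - Suc j)) (sub X n x (n - Suc j) (n - j))"
    using enum_nth[of "n - Suc j" n x] j by (simp add: Suc_diff_Suc)
  also have "\<dots> = sub X n (\<nu> n x) j (Suc j)" using nu_sub[OF x, of "n - Suc j" "n - j"] j
    by (simp add: Suc_diff_Suc)
  finally show "enum X n (\<nu> n x) ! j = rev (map (\<nu> 1) (enum X n x)) ! j"
    using enum_nth j by simp
qed simp

end

locale pg =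
  fixes M :: "('a, 'z) partial_group_scheme"
  assumes pg: "is_partial_group M"
begin

abbreviation "D \<equiv> pg_dom M"
abbreviation "C \<equiv> pg_carrier M"
abbreviation "P \<equiv> pg_prod M"
abbreviation "iv \<equiv> pg_inv M"
abbreviation "one \<equiv> pg_unit M"

lemma pgc0: "pg_dom M \<subseteq> lists (pg_carrier M)"
  using pg[unfolded is_partial_group_def, THEN conjunct1] .

lemma pgc1: "[] \<in> pg_dom M"
  using pg[unfolded is_partial_group_def, THEN conjunct2, THEN conjunct1] .

lemma pgc2: "\<forall>x\<in>pg_carrier M. [x] \<in> pg_dom M"
  using pg[unfolded is_partial_group_def, THEN conjunct2, THEN conjunct2, THEN conjunct1] .

lemma pgc3: "\<forall>u v. u @ v \<in> pg_dom M \<longrightarrow> u \<in> pg_dom M \<and> v \<in> pg_dom M"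
  using pg[unfolded is_partial_group_def, THEN conjunct2, THEN conjunct2, THEN conjunct2, THEN conjunct1] .

lemma pgc4: "\<forall>u\<in>pg_dom M. pg_prod M u \<in> pg_carrier M"
  using pg[unfolded is_partial_group_def, THEN conjunct2, THEN conjunct2, THEN conjunct2, THEN conjunct2, THEN conjunct1] .

lemma pgc5: "\<forall>x\<in>pg_carrier M. pg_prod M [x] = x"
  using pg[unfolded is_partial_group_def, THEN conjunct2, THEN conjunct2, THEN conjunct2, THEN conjunct2, THEN conjunct2, THEN conjunct1] .

lemma pgc6: "\<forall>u v w. u @ v @ w \<in> pg_dom M \<longrightarrow>
         u @ [pg_prod M v] @ w \<in> pg_dom M
       \<and> pg_prod M (u @ v @ w) = pg_prod M (u @ [pg_prod M v] @ w)"
  using pg[unfolded is_partial_group_def, THEN conjunct2, THEN conjunct2, THEN conjunct2, THEN conjunct2, THEN conjunct2, THEN conjunct2, THEN conjunct1] .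

lemma pgc7: "\<forall>x\<in>pg_carrier M. pg_inv M x \<in> pg_carrier M \<and> pg_inv M (pg_inv M x) = x"
  using pg[unfolded is_partial_group_def, THEN conjunct2, THEN conjunct2, THEN conjunct2, THEN conjunct2, THEN conjunct2, THEN conjunct2, THEN conjunct2, THEN conjunct1] .

lemma pgc8: "\<forall>u\<in>pg_dom M. inv_word M u @ u \<in> pg_dom M
         \<and> pg_prod M (inv_word M u @ u) = pg_unit M"
  using pg[unfolded is_partial_group_def, THEN conjunct2, THEN conjunct2, THEN conjunct2, THEN conjunct2, THEN conjunct2, THEN conjunct2, THEN conjunct2, THEN conjunct2] .

lemma dom_C: "w \<in> D \<Longrightarrow> set w \<subseteq> C" using pgc0 by auto
lemma nth_C[simp]: "w \<in> D \<Longrightarrow> k < length w \<Longrightarrow> w ! k \<in> C" using dom_C nth_mem by blast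
lemma nil_dom[simp]: "[] \<in> D" using pgc1 .
lemma single_dom: "x \<in> C \<Longrightarrow> [x] \<in> D" using pgc2 by blast
lemma split_dom: "u @ v \<in> D \<Longrightarrow> u \<in> D \<and> v \<in> D" using pgc3 by blast
lemma prod_C: "w \<in> D \<Longrightarrow> P w \<in> C" using pgc4 by blast
lemma prod_single[simp]: "x \<in> C \<Longrightarrow> P [x] = x" using pgc5 by blast
lemma ax: "u @ v @ w \<in> D \<Longrightarrow> u @ [P v] @ w \<in> D \<and> P (u @ v @ w) = P (u @ [P v] @ w)"
  using pgc6 by blast
lemma inv_C: "x \<in> C \<Longrightarrow> iv x \<in> C" using pgc7 by blast
lemma inv_inv[simp]: "x \<in> C \<Longrightarrow> iv (iv x) = x" using pgc7 by blast
lemma inv_ax: "u \<in> D \<Longrightarrow> inv_word M u @ u \<in> D \<and> P (inv_word M u @ u) = one" using pgc8 by blast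

lemma one_C: "one \<in> C" unfolding pg_unit_def using prod_C by simp

lemma take_dom: "w \<in> D \<Longrightarrow> take k w \<in> D" using split_dom[of "take k w" "drop k w"] by simp
lemma drop_dom: "w \<in> D \<Longrightarrow> drop k w \<in> D" using split_dom[of "take k w" "drop k w"] by simp

lemma pair_dom: "w \<in> D \<Longrightarrow> Suc m < length w \<Longrightarrow> [w ! m, w ! Suc m] \<in> D"
proof -
  assume w: "w \<in> D" "Suc m < length w"
  have "take 2 (drop m w) = [w ! m, w ! Suc m]" using w(2)
    by (simp add: take_Suc_conv_app_nth numeral_2_eq_2)
  then show ?thesis using take_dom[OF drop_dom[OF w(1)], of 2 m] by simp
qed

lemma triple_dom: "w \<in> D \<Longrightarrow> Suc (Suc m) < length w \<Longrightarrow> [w ! m, w ! Suc m, w ! Suc (Suc m)] \<in> D"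
proof -
  assume w: "w \<in> D" "Suc (Suc m) < length w"
  have "take 3 (drop m w) = [w ! m, w ! Suc m, w ! Suc (Suc m)]" using w(2)
    by (simp add: take_Suc_conv_app_nth numeral_3_eq_3)
  then show ?thesis using take_dom[OF drop_dom[OF w(1)], of 3 m] by simp
qed

lemma ins_unit: "u @ w \<in> D \<Longrightarrow> u @ [one] @ w \<in> D \<and> P (u @ [one] @ w) = P (u @ w)"
  using ax[of u "[]" w] unfolding pg_unit_def by simp

lemma right_unit[simp]: "a \<in> C \<Longrightarrow> P [a, one] = a"
  using ins_unit[of "[a]" "[]"] single_dom by simp

lemma left_unit[simp]: "a \<in> C \<Longrightarrow> P [one, a] = a"
  using ins_unit[of "[]" "[a]"] single_dom by simp

lemma assoc3: "[a, b, c] \<in> D \<Longrightarrow> P [P [a, b], c] = P [a, P [b, c]]"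
  using ax[of "[]" "[a, b]" "[c]"] ax[of "[a]" "[b, c]" "[]"] by simp

lemma inv_word_dom: "u \<in> D \<Longrightarrow> inv_word M u \<in> D"
  using inv_ax split_dom by blast

lemma inv_word_inv: "u \<in> D \<Longrightarrow> inv_word M (inv_word M u) = u"
proof -
  assume u: "u \<in> D"
  have "map (iv \<circ> iv) u = u" using dom_C[OF u] by (induction u) auto
  then show ?thesis by (simp add: inv_word_def rev_map)
qed

lemma inv_one: "iv one = one"
proof -
  have "[one] \<in> D" using single_dom one_C by simp
  then have "P ([iv one] @ [one]) = one" using inv_ax[of "[one]"] by (simp add: inv_word_def)
  then show ?thesis using inv_C[OF one_C] by simp
qed

lemma inv_pair:
  assumes ab: "[a, b] \<in> D"
  shows "iv (P [a, b]) = P [iv b, iv a]"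
proof -
  have aC: "a \<in> C" "b \<in> C" using dom_C[OF ab] by auto
  let ?c = "P [a, b]"
  let ?p = "P [iv b, iv a]"
  have cC: "?c \<in> C" using prod_C[OF ab] .
  have w1: "[iv b, iv a, a, b] \<in> D" "P [iv b, iv a, a, b] = one"
    using inv_ax[OF ab] by (auto simp: inv_word_def)
  have "[?p] @ [a, b] \<in> D \<and> P ([iv b, iv a] @ [a, b]) = P ([?p] @ [a, b])"
    using ax[of "[]" "[iv b, iv a]" "[a, b]"] w1 by simp
  then have w2: "[?p, a, b] \<in> D" "P [?p, a, b] = one" using w1 by auto
  have "[?p] @ [?c] @ [] \<in> D \<and> P ([?p] @ [a, b] @ []) = P ([?p] @ [?c] @ [])"
    using ax[of "[?p]" "[a, b]" "[]"] w2 by simp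
  then have z: "[?p, ?c] \<in> D" "P [?p, ?c] = one" using w2 by auto
  have pC: "?p \<in> C" using dom_C[OF z(1)] by simp
  have "inv_word M (inv_word M [?p, ?c]) @ inv_word M [?p, ?c] \<in> D"
    using inv_ax[OF inv_word_dom[OF z(1)]] by blast
  then have w3: "[?p, ?c, iv ?c, iv ?p] \<in> D"
    using inv_word_inv[OF z(1)] by (simp add: inv_word_def)
  then have w4: "[?p, ?c, iv ?c] \<in> D" using split_dom[of "[?p, ?c, iv ?c]" "[iv ?p]"] by simp
  have cc: "[?c, iv ?c] \<in> D" "P [?c, iv ?c] = one"
  proof -
    have "[iv ?c] \<in> D" using single_dom inv_C cC by simp
    then have "inv_word M [iv ?c] @ [iv ?c] \<in> D \<and> P (inv_word M [iv ?c] @ [iv ?c]) = one"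
      using inv_ax by blast
    then show "[?c, iv ?c] \<in> D" "P [?c, iv ?c] = one" using cC by (auto simp: inv_word_def)
  qed
  have "P [P [?p, ?c], iv ?c] = P [?p, P [?c, iv ?c]]" using assoc3[OF w4] .
  then have "P [one, iv ?c] = P [?p, one]" using z cc by simp
  then show ?thesis using pC inv_C[OF cC] by simp
qed

end

context pg begin

lemma nerve_simp[simp]: "simp (nerve M) n = {w \<in> D. length w = n}"
  by (simp add: nerve_def)

lemma nerve_face: "face (nerve M) n i w = (if i = 0 then tl w else if i = n then butlast w
                     else take (i - 1) w @ [P [w ! (i - 1), w ! i]] @ drop (Suc i) w)"
  by (simp add: nerve_def)

lemma nerve_degen: "degen (nerve M) n i w = take i w @ [one] @ drop i w"
  by (simp add: nerve_def)

lemma face_len[simp]: "length w = n \<Longrightarrow> 1 \<le> n \<Longrightarrow> i \<le> n \<Longrightarrow> length (face (nerve M) n i w) = n - 1"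
  by (auto simp: nerve_face)

lemma face_nth: "length w = n \<Longrightarrow> 1 \<le> n \<Longrightarrow> i \<le> n \<Longrightarrow> k < n - 1 \<Longrightarrow>
   face (nerve M) n i w ! k = (if Suc k < i then w ! k else if Suc k = i then P [w ! k, w ! Suc k] else w ! Suc k)"
  by (auto simp: nerve_face nth_tl nth_butlast nth_append min_def)

lemma face_dom: "w \<in> D \<Longrightarrow> length w = n \<Longrightarrow> 1 \<le> n \<Longrightarrow> i \<le> n \<Longrightarrow> face (nerve M) n i w \<in> D"
proof -
  assume w: "w \<in> D" "length w = n" "1 \<le> n" "i \<le> n"
  show ?thesis
  proof (cases "i = 0 \<or> i = n")
    case True
    then show ?thesis using w drop_dom[OF w(1), of 1] take_dom[OF w(1), of "n - 1"]
      by (auto simp: nerve_face drop_Suc butlast_conv_take)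
  next
    case False
    then have i: "0 < i" "i < n" using w by auto
    have "w = take (i - 1) w @ [w ! (i - 1), w ! i] @ drop (Suc i) w"
    proof -
      have "w = take (i - 1) w @ drop (i - 1) w" by simp
      also have "drop (i - 1) w = w ! (i - 1) # drop i w" using i w Cons_nth_drop_Suc[of "i - 1" w] by simp
      also have "drop i w = w ! i # drop (Suc i) w" using i w by (simp add: Cons_nth_drop_Suc)
      finally show ?thesis by simp
    qed
    then have "take (i - 1) w @ [w ! (i - 1), w ! i] @ drop (Suc i) w \<in> D" using w by simp
    then show ?thesis using ax i by (simp add: nerve_face)
  qed
qed

lemma degen_len[simp]: "i \<le> length w \<Longrightarrow> length (degen (nerve M) n i w) = Suc (length w)"
  by (simp add: nerve_degen)

lemma degen_nth: "i \<le> length w \<Longrightarrow> k \<le> length w \<Longrightarrow>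
   degen (nerve M) n i w ! k = (if k < i then w ! k else if k = i then one else w ! (k - 1))"
  by (auto simp: nerve_degen nth_append min_def)

lemma degen_dom: "w \<in> D \<Longrightarrow> degen (nerve M) n i w \<in> D"
  using ins_unit[of "take i w" "drop i w"] by (simp add: nerve_degen)

lemma nerve_sset: "is_sset (nerve M)"
  unfolding is_sset_def
proof (intro conjI allI impI)
  fix n i x assume a: "1 \<le> n \<and> i \<le> n \<and> x \<in> simp (nerve M) n"
  then show "face (nerve M) n i x \<in> simp (nerve M) (n - 1)" using face_dom by auto
next
  fix n i x assume a: "i \<le> n \<and> x \<in> simp (nerve M) n"
  then show "degen (nerve M) n i x \<in> simp (nerve M) (Suc n)" using degen_dom by auto
next
  fix n i j x assume a: "2 \<le> n \<and> i < j \<and> j \<le> n \<and> x \<in> simp (nerve M) n"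
  then have x: "x \<in> D" "length x = n" and ij: "2 \<le> n" "i < j" "j \<le> n" by auto
  show "face (nerve M) (n - 1) i (face (nerve M) n j x) = face (nerve M) (n - 1) (j - 1) (face (nerve M) n i x)"
  proof (rule nth_equalityI)
    fix k assume "k < length (face (nerve M) (n - 1) i (face (nerve M) n j x))"
    then have k: "k < n - 2" using x ij by simp
    have tr: "Suc (Suc k) < length x \<Longrightarrow> P [P [x ! k, x ! Suc k], x ! Suc (Suc k)] = P [x ! k, P [x ! Suc k, x ! Suc (Suc k)]]"
      using assoc3 triple_dom[OF x(1)] by blast
    show "face (nerve M) (n - 1) i (face (nerve M) n j x) ! k = face (nerve M) (n - 1) (j - 1) (face (nerve M) n i x) ! k"
      using k x ij tr by (auto simp add: face_nth)
  qed (use x ij in simp)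
next
  fix n i j x assume a: "i < j \<and> j \<le> n \<and> x \<in> simp (nerve M) n"
  then have x: "x \<in> D" "length x = n" and ij: "i < j" "j \<le> n" by auto
  show "face (nerve M) (Suc n) i (degen (nerve M) n j x) = degen (nerve M) (n - 1) (j - 1) (face (nerve M) n i x)"
  proof (rule nth_equalityI)
    fix k assume "k < length (face (nerve M) (Suc n) i (degen (nerve M) n j x))"
    then have k: "k < n" using x ij by simp
    show "face (nerve M) (Suc n) i (degen (nerve M) n j x) ! k = degen (nerve M) (n - 1) (j - 1) (face (nerve M) n i x) ! k"
      using k x ij by (auto simp add: face_nth degen_nth)
  qed (use x ij in simp)
next
  fix n j x assume a: "j \<le> n \<and> x \<in> simp (nerve M) n"
  then have x: "x \<in> D" "length x = n" and ij: "j \<le> n" by auto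
    show "face (nerve M) (Suc n) j (degen (nerve M) n j x) = x"
    proof (rule nth_equalityI)
      fix k assume "k < length (face (nerve M) (Suc n) j (degen (nerve M) n j x))"
      then have k: "k < n" using x ij by simp
      show "face (nerve M) (Suc n) j (degen (nerve M) n j x) ! k = x ! k"
        using k x ij by (auto simp add: face_nth degen_nth)
    qed (use x ij in simp)
  next
  fix n j x assume a: "j \<le> n \<and> x \<in> simp (nerve M) n"
  then have x: "x \<in> D" "length x = n" and ij: "j \<le> n" by auto
    show "face (nerve M) (Suc n) (Suc j) (degen (nerve M) n j x) = x"
    proof (rule nth_equalityI)
      fix k assume "k < length (face (nerve M) (Suc n) (Suc j) (degen (nerve M) n j x))"
      then have k: "k < n" using x ij by simp
      show "face (nerve M) (Suc n) (Suc j) (degen (nerve M) n j x) ! k = x ! k"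
        using k x ij by (auto simp add: face_nth degen_nth)
    qed (use x ij in simp)
next
  fix n i j x assume a: "Suc j < i \<and> i \<le> Suc n \<and> x \<in> simp (nerve M) n"
  then have x: "x \<in> D" "length x = n" and ij: "Suc j < i" "i \<le> Suc n" by auto
  show "face (nerve M) (Suc n) i (degen (nerve M) n j x) = degen (nerve M) (n - 1) j (face (nerve M) n (i - 1) x)"
  proof (rule nth_equalityI)
    fix k assume "k < length (face (nerve M) (Suc n) i (degen (nerve M) n j x))"
    then have k: "k < n" using x ij by simp
    show "face (nerve M) (Suc n) i (degen (nerve M) n j x) ! k = degen (nerve M) (n - 1) j (face (nerve M) n (i - 1) x) ! k"
      using k x ij by (auto simp add: face_nth degen_nth)
  qed (use x ij in simp)
next
  fix n i j x assume a: "i \<le> j \<and> j \<le> n \<and> x \<in> simp (nerve M) n"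
  then have x: "x \<in> D" "length x = n" and ij: "i \<le> j" "j \<le> n" by auto
  show "degen (nerve M) (Suc n) i (degen (nerve M) n j x) = degen (nerve M) (Suc n) (Suc j) (degen (nerve M) n i x)"
  proof (rule nth_equalityI)
    fix k assume "k < length (degen (nerve M) (Suc n) i (degen (nerve M) n j x))"
    then have k: "k < Suc (Suc n)" using x ij by simp
    show "degen (nerve M) (Suc n) i (degen (nerve M) n j x) ! k = degen (nerve M) (Suc n) (Suc j) (degen (nerve M) n i x) ! k"
      using k x ij by (auto simp add: degen_nth)
  qed (use x ij in simp)
qed

end

context pg begin

lemma nerve_L: "length w = m \<Longrightarrow> k \<le> m \<Longrightarrow> drop_last (nerve M) k m w = take (m - k) w"
proof (induction k arbitrary: m w)
  case 0 then show ?case by simp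
next
  case (Suc k)
  have "face (nerve M) m m w = butlast w" using Suc.prems by (simp add: nerve_face)
  then have "drop_last (nerve M) (Suc k) m w = take (m - 1 - k) (butlast w)"
    using Suc.IH[of "butlast w" "m - 1"] Suc.prems by simp
  then show ?case using Suc.prems by (simp add: butlast_conv_take min_def)
qed

lemma nerve_F: "drop_first (nerve M) k m w = drop k w"
proof (induction k arbitrary: m w)
  case 0 then show ?case by simp
next
  case (Suc k)
  have "face (nerve M) m 0 w = tl w" by (simp add: nerve_face)
  then show ?case using Suc.IH by (simp add: drop_Suc)
qed

lemma nerve_enum: "length w = n \<Longrightarrow> enum (nerve M) n w = map (\<lambda>j. [w ! j]) [0..<n]"
proof -
  assume w: "length w = n"
  have "edge (nerve M) n w j = [w ! j]" if j: "j < n" for j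
  proof -
    have "edge (nerve M) n w j = drop j (take (n - (n - Suc j)) w)"
      unfolding edge_def using nerve_L[OF w, of "n - Suc j"] nerve_F by simp
    also have "n - (n - Suc j) = Suc j" using j by simp
    finally show ?thesis using j w by (simp add: take_Suc_conv_app_nth)
  qed
  then show ?thesis unfolding enum_def by simp
qed

lemma nerve_N: "N_sset (nerve M)"
  unfolding N_sset_def
proof (intro allI inj_onI)
  fix n v w assume v: "v \<in> simp (nerve M) n" and w: "w \<in> simp (nerve M) n"
    and e: "enum (nerve M) n v = enum (nerve M) n w"
  have lv: "length v = n" and lw: "length w = n" using v w by auto
  have "map (\<lambda>j. [v ! j]) [0..<n] = map (\<lambda>j. [w ! j]) [0..<n]"
    using e nerve_enum[OF lv] nerve_enum[OF lw] by simp
  then have "\<forall>j<n. v ! j = w ! j" by (metis (no_types, lifting) diff_zero length_upt list.inject nth_map nth_upt plus_nat.add_0)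
  then show "v = w" using lv lw by (simp add: nth_equalityI)
qed

lemma nerve_red: "simp (nerve M) 0 = {[]}" by auto

lemma nerve_unit: "sset_unit (nerve M) = [one]"
  unfolding sset_unit_def using nerve_red by (simp add: nerve_degen)

lemma nerve_S: "w \<in> D \<Longrightarrow> length w = m \<Longrightarrow> k < m \<Longrightarrow>
   drop_second (nerve M) k m w = P (take (Suc k) w) # drop (Suc k) w"
proof (induction k arbitrary: m w)
  case 0
  then obtain a r where w: "w = a # r" by (cases w) auto
  then show ?case using 0 dom_C[OF 0(1)] by simp
next
  case (Suc k)
  let ?w' = "P [w ! 0, w ! 1] # drop 2 w"
  have f: "face (nerve M) m 1 w = ?w'" using Suc.prems by (simp add: nerve_face numeral_2_eq_2)
  have w'D: "?w' \<in> D" using face_dom[OF Suc.prems(1,2), of 1] f Suc.prems by simp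
  have "drop_second (nerve M) (Suc k) m w = drop_second (nerve M) k (m - 1) ?w'" using f by simp
  also have "\<dots> = P (take (Suc k) ?w') # drop (Suc k) ?w'"
  proof -
    have "length ?w' = m - 1" "k < m - 1" using Suc.prems by auto
    then show ?thesis using Suc.IH[OF w'D] by blast
  qed
  also have "drop (Suc k) ?w' = drop (Suc (Suc k)) w" by (simp add: numeral_2_eq_2)
  also have "P (take (Suc k) ?w') = P (take (Suc (Suc k)) w)"
  proof -
    have t: "take (Suc (Suc k)) w = [w ! 0, w ! 1] @ take k (drop 2 w)"
      using Suc.prems by (cases w; cases "tl w") auto
    have "take (Suc (Suc k)) w \<in> D" using take_dom[OF Suc.prems(1)] .
    then have "P ([] @ [w ! 0, w ! 1] @ take k (drop 2 w)) = P ([] @ [P [w ! 0, w ! 1]] @ take k (drop 2 w))"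
      using ax[of "[]" "[w ! 0, w ! 1]" "take k (drop 2 w)"] t by simp
    then show ?thesis using t by simp
  qed
  finally show ?case .
qed

lemma nerve_prod: "w \<in> D \<Longrightarrow> prod_op (nerve M) (length w) w = [P w]"
proof (cases "length w")
  case 0
  then show ?thesis by (simp add: prod_op_def nerve_degen pg_unit_def)
next
  case (Suc p)
  assume w: "w \<in> D"
  show ?thesis using nerve_S[OF w, of "length w" p] Suc by (simp add: prod_op_def)
qed

lemma inv_word_nth: "t < length w \<Longrightarrow> inv_word M w ! t = iv (w ! (length w - Suc t))"
  by (simp add: inv_word_def rev_nth)

lemma inv_word_len[simp]: "length (inv_word M w) = length w"
  by (simp add: inv_word_def)

lemma nerve_inversion: "inversion (nerve M) (\<lambda>n w. inv_word M w)"
  unfolding inversion_def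
proof (intro conjI ballI allI impI)
  show "sset_map (nerve M) (opposite (nerve M)) (\<lambda>n w. inv_word M w)"
    unfolding sset_map_def
  proof (intro conjI allI impI)
    fix n x assume "x \<in> simp (nerve M) n"
    then show "inv_word M x \<in> simp (opposite (nerve M)) n"
      using inv_word_dom by (simp add: opposite_def)
  next
    fix n i x assume a: "1 \<le> n \<and> i \<le> n \<and> x \<in> simp (nerve M) n"
    then have x: "x \<in> D" "length x = n" and i: "1 \<le> n" "i \<le> n" by auto
    show "inv_word M (face (nerve M) n i x) = face (opposite (nerve M)) n i (inv_word M x)"
      unfolding opposite_def
    proof (simp, rule nth_equalityI)
      show "length (inv_word M (face (nerve M) n i x)) = length (face (nerve M) n (n - i) (inv_word M x))"
        using x i by simp
      fix k assume "k < length (inv_word M (face (nerve M) n i x))"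
      then have k: "k < n - 1" using x i by simp
      define m where "m = n - 2 - k"
      have m: "m < n - 1" "Suc m < n" using k by (auto simp: m_def)
      have ip: "iv (P [x ! m, x ! Suc m]) = P [iv (x ! Suc m), iv (x ! m)]"
        using inv_pair pair_dom[OF x(1)] m x by simp
      have l: "inv_word M (face (nerve M) n i x) ! k = iv (face (nerve M) n i x ! m)"
        using inv_word_nth[of k "face (nerve M) n i x"] k x i by (simp add: m_def)
      have l2: "face (nerve M) n i x ! m = (if Suc m < i then x ! m else if Suc m = i then P [x ! m, x ! Suc m] else x ! Suc m)"
        using face_nth[OF x(2) i, of m] m by simp
      have r: "face (nerve M) n (n - i) (inv_word M x) ! k =
        (if Suc k < n - i then inv_word M x ! k else if Suc k = n - i then P [inv_word M x ! k, inv_word M x ! Suc k]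
         else inv_word M x ! Suc k)"
        using face_nth[of "inv_word M x" n "n - i" k] x i k by simp
      have mm: "n - Suc k = Suc m" "n - Suc (Suc k) = m" using k by (auto simp: m_def)
      have r1: "inv_word M x ! k = iv (x ! Suc m)" "inv_word M x ! Suc k = iv (x ! m)"
        using inv_word_nth[of k x] inv_word_nth[of "Suc k" x] k x mm by auto
      have c1: "Suc k < n - i \<longleftrightarrow> i < Suc m" "Suc k = n - i \<longleftrightarrow> Suc m = i" using k i by (auto simp: m_def)
      show "inv_word M (face (nerve M) n i x) ! k = face (nerve M) n (n - i) (inv_word M x) ! k"
        using l l2 r r1 c1 ip by auto
    qed
  next
    fix n i x assume a: "i \<le> n \<and> x \<in> simp (nerve M) n"
    then have x: "x \<in> D" "length x = n" and i: "i \<le> n" by auto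
    show "inv_word M (degen (nerve M) n i x) = degen (opposite (nerve M)) n i (inv_word M x)"
    proof -
      have "rev (map iv (drop i x)) = take (n - i) (rev (map iv x))"
        "rev (map iv (take i x)) = drop (n - i) (rev (map iv x))"
        using rev_drop[of i "map iv x"] rev_take[of i "map iv x"] x by (simp_all add: drop_map take_map)
      then show ?thesis using inv_one by (simp add: opposite_def nerve_degen inv_word_def)
    qed
  qed
next
  fix n x assume "x \<in> simp (nerve M) n"
  then show "inv_word M (inv_word M x) = x" using inv_word_inv by simp
next
  fix n x assume x: "x \<in> simp (nerve M) n" and n: "1 \<le> n"
  let ?y = "inv_word M x @ x"
  have y: "?y \<in> D" "P ?y = one" using inv_ax x by auto
  have ly: "length ?y = 2 * n" using x by simp
  have "enum (nerve M) (2 * n) ?y = enum (nerve M) n (inv_word M x) @ enum (nerve M) n x"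
  proof -
    have "enum (nerve M) (2 * n) ?y = map (\<lambda>j. [?y ! j]) [0..<2 * n]" using nerve_enum[OF ly] .
    also have "\<dots> = map (\<lambda>j. [inv_word M x ! j]) [0..<n] @ map (\<lambda>j. [x ! j]) [0..<n]"
      using x by (intro nth_equalityI) (auto simp: nth_append)
    finally show ?thesis using nerve_enum[of "inv_word M x" n] nerve_enum[of x n] x by simp
  qed
  moreover have "prod_op (nerve M) (2 * n) ?y = sset_unit (nerve M)"
    using nerve_prod[OF y(1)] ly y(2) nerve_unit by simp
  ultimately show "\<exists>y\<in>simp (nerve M) (2 * n). enum (nerve M) (2 * n) y = enum (nerve M) n (inv_word M x) @ enum (nerve M) n x
            \<and> prod_op (nerve M) (2 * n) y = sset_unit (nerve M)"
    using y ly by auto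
qed

lemma nerve_rni: "red_N_inv_sset (nerve M)"
  unfolding red_N_inv_sset_def reduced_def using nerve_sset nerve_N nerve_red nerve_inversion by blast

end

locale rni = ssinv X \<nu> for X :: "'s sset" and \<nu> +
  fixes v0 :: 's
  assumes red: "simp X 0 = {v0}"
    and N: "N_sset X"
    and invo: "\<forall>n. \<forall>x\<in>simp X n. \<nu> n (\<nu> n x) = x"
    and invc: "\<forall>n. \<forall>x\<in>simp X n. 1 \<le> n \<longrightarrow>
        (\<exists>y\<in>simp X (2 * n). enum X (2 * n) y = enum X n (\<nu> n x) @ enum X n x
            \<and> prod_op X (2 * n) y = sset_unit X)"
begin

definition rep :: "'s list \<Rightarrow> 's" where
  "rep w = (THE x. x \<in> simp X (length w) \<and> enum X (length w) x = w)"

definition PG :: "'s partial_group" where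
  "PG = \<lparr>pg_carrier = simp X 1, pg_dom = {enum X n x | n x. x \<in> simp X n},
         pg_prod = (\<lambda>w. prod_op X (length w) (rep w)), pg_inv = \<nu> 1\<rparr>"

lemma PG_simps[simp]: "pg_carrier PG = simp X 1" "pg_dom PG = {enum X n x | n x. x \<in> simp X n}"
  "pg_prod PG w = prod_op X (length w) (rep w)" "pg_inv PG = \<nu> 1"
  by (simp_all add: PG_def)

lemma rep_enum: "x \<in> simp X n \<Longrightarrow> rep (enum X n x) = x"
proof -
  assume x: "x \<in> simp X n"
  have "inj_on (enum X n) (simp X n)" using N unfolding N_sset_def by blast
  then have "\<exists>!y. y \<in> simp X n \<and> enum X n y = enum X n x"
    using x by (auto dest: inj_onD)
  then show ?thesis unfolding rep_def using x by (auto intro: the1_equality)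
qed

lemma prod_enum: "x \<in> simp X n \<Longrightarrow> pg_prod PG (enum X n x) = prod_op X n x"
  using rep_enum by simp

lemma unit_eq: "sset_unit X = degen X 0 0 v0"
  unfolding sset_unit_def using red by simp

lemma enum0: "enum X 0 x = []" by (simp add: enum_def)
lemma enum1: "enum X 1 x = [x]" by (simp add: enum_def edge_def)

lemma pg_unit_PG: "pg_unit PG = degen X 0 0 v0"
proof -
  have "rep [] = v0" using rep_enum[of v0 0] red enum0 by simp
  then show ?thesis unfolding pg_unit_def by (simp add: prod_op_def)
qed

lemma sub0: "x \<in> simp X n \<Longrightarrow> j \<le> n \<Longrightarrow> sub X n x j j = v0"
  using sub_simp[of x n j j] red by simp

lemma enum_degen': "x \<in> simp X n \<Longrightarrow> i \<le> n \<Longrightarrow>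
   enum X (Suc n) (degen X n i x) = take i (enum X n x) @ [degen X 0 0 v0] @ drop i (enum X n x)"
proof -
  assume x: "x \<in> simp X n" and i: "i \<le> n"
  show ?thesis
  proof (rule nth_equalityI)
    fix j assume "j < length (enum X (Suc n) (degen X n i x))"
    then have j: "j \<le> n" by simp
    show "enum X (Suc n) (degen X n i x) ! j = (take i (enum X n x) @ [degen X 0 0 v0] @ drop i (enum X n x)) ! j"
      using enum_degen[OF x i j] sub0[OF x j] i j by (auto simp: nth_append min_def)
  qed (use i in simp)
qed

lemma PG_pg: "is_partial_group PG"
  unfolding is_partial_group_def
proof (intro conjI)
  show "pg_dom PG \<subseteq> lists (pg_carrier PG)" using enum_simp by auto
next
  have "[] = enum X 0 v0 \<and> v0 \<in> simp X 0" using red enum0 by simp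
  then show "[] \<in> pg_dom PG" by auto
next
  show "\<forall>x\<in>pg_carrier PG. [x] \<in> pg_dom PG"
  proof (intro ballI)
    fix x assume "x \<in> pg_carrier PG"
    then show "[x] \<in> pg_dom PG" using enum1 by (auto intro!: exI[of _ 1])
  qed
next
  show "\<forall>u v. u @ v \<in> pg_dom PG \<longrightarrow> u \<in> pg_dom PG \<and> v \<in> pg_dom PG"
  proof (intro allI impI)
    fix u v assume "u @ v \<in> pg_dom PG"
    then obtain n x where x: "x \<in> simp X n" and e: "enum X n x = u @ v" by auto
    have "length (enum X n x) = length (u @ v)" using e by simp
    then have n: "n = length u + length v" by simp
    have "enum X (length u - 0) (sub X n x 0 (length u)) = u"
      using enum_sub[OF x, of 0 "length u"] e n by simp
    moreover have "sub X n x 0 (length u) \<in> simp X (length u - 0)" using sub_simp[OF x, of 0 "length u"] n by simp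
    moreover have "enum X (n - length u) (sub X n x (length u) n) = v"
      using enum_sub[OF x, of "length u" n] e n by simp
    moreover have "sub X n x (length u) n \<in> simp X (n - length u)" using sub_simp[OF x, of "length u" n] n by simp
    ultimately show "u \<in> pg_dom PG \<and> v \<in> pg_dom PG" by (metis (mono_tags, lifting) PG_simps(2) mem_Collect_eq)
  qed
next
  show "\<forall>u\<in>pg_dom PG. pg_prod PG u \<in> pg_carrier PG"
  proof (intro ballI)
    fix u assume "u \<in> pg_dom PG"
    then obtain n x where x: "x \<in> simp X n" and e: "u = enum X n x" by auto
    show "pg_prod PG u \<in> pg_carrier PG" using prod_enum[OF x] prod_simp[OF x] e by simp
  qed
next
  show "\<forall>x\<in>pg_carrier PG. pg_prod PG [x] = x"
  proof (intro ballI)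
    fix x assume "x \<in> pg_carrier PG"
    then show "pg_prod PG [x] = x" using prod_enum[of x 1] enum1 by (simp add: prod_op_def)
  qed
next
  show "\<forall>u v w. u @ v @ w \<in> pg_dom PG \<longrightarrow> u @ [pg_prod PG v] @ w \<in> pg_dom PG \<and> pg_prod PG (u @ v @ w) = pg_prod PG (u @ [pg_prod PG v] @ w)"
  proof (intro allI impI)
    fix u v w assume "u @ v @ w \<in> pg_dom PG"
    then obtain n x where x: "x \<in> simp X n" and e: "enum X n x = u @ v @ w" by auto
    let ?a = "length u" and ?k = "length v"
    have "length (enum X n x) = length (u @ v @ w)" using e by simp
    then have n: "n = ?a + ?k + length w" by simp
    have tu: "take ?a (enum X n x) = u" and dw: "drop (?a + ?k) (enum X n x) = w" using e by auto
    have sv: "enum X (?a + ?k - ?a) (sub X n x ?a (?a + ?k)) = v"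
      using enum_sub[OF x, of ?a "?a + ?k"] e n by simp
    have svs: "sub X n x ?a (?a + ?k) \<in> simp X ?k" using sub_simp[OF x, of ?a "?a + ?k"] n by simp
    have Pv: "pg_prod PG v = prod_op X ?k (sub X n x ?a (?a + ?k))"
      using prod_enum[OF svs] sv by simp
    show "u @ [pg_prod PG v] @ w \<in> pg_dom PG \<and> pg_prod PG (u @ v @ w) = pg_prod PG (u @ [pg_prod PG v] @ w)"
    proof (cases "?k = 0")
      case True
      then have Pv0: "pg_prod PG v = degen X 0 0 v0" using Pv sub0[OF x, of ?a] n by (simp add: prod_op_def)
      let ?x' = "degen X n ?a x"
      have x': "?x' \<in> simp X (Suc n)" using degen_simp[OF x] n by simp
      have e': "enum X (Suc n) ?x' = u @ [pg_prod PG v] @ w"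
        using enum_degen'[OF x, of ?a] n tu dw True Pv0 by simp
      have "pg_prod PG (u @ [pg_prod PG v] @ w) = prod_op X n x"
        using e' prod_enum[OF x'] prod_degen[OF x, of ?a] n by simp
      moreover have "pg_prod PG (u @ v @ w) = prod_op X n x" using e prod_enum[OF x] by simp
      moreover have "u @ [pg_prod PG v] @ w \<in> pg_dom PG"
        using e' x' by (metis (mono_tags, lifting) PG_simps(2) mem_Collect_eq)
      ultimately show ?thesis by simp
    next
      case False
      obtain x' where x': "x' \<in> simp X (n - ?k + 1)"
        and e': "enum X (n - ?k + 1) x' = take ?a (enum X n x) @ [prod_op X ?k (sub X n x ?a (?a + ?k))] @ drop (?a + ?k) (enum X n x)"
        and p': "prod_op X (n - ?k + 1) x' = prod_op X n x"
        using COLL[OF x, of ?a ?k] n False by auto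
      have e'': "enum X (n - ?k + 1) x' = u @ [pg_prod PG v] @ w" using e' tu dw Pv by simp
      have "pg_prod PG (u @ [pg_prod PG v] @ w) = prod_op X n x"
        using e'' prod_enum[OF x'] p' by metis
      moreover have "pg_prod PG (u @ v @ w) = prod_op X n x" using e prod_enum[OF x] by simp
      ultimately show ?thesis using e'' x' by (metis (mono_tags, lifting) PG_simps(2) mem_Collect_eq)
    qed
  qed
next
  show "\<forall>x\<in>pg_carrier PG. pg_inv PG x \<in> pg_carrier PG \<and> pg_inv PG (pg_inv PG x) = x"
  proof (intro ballI)
    fix x assume "x \<in> pg_carrier PG"
    then show "pg_inv PG x \<in> pg_carrier PG \<and> pg_inv PG (pg_inv PG x) = x"
      using nu_simp invo by simp
  qed
next
  show "\<forall>u\<in>pg_dom PG. inv_word PG u @ u \<in> pg_dom PG \<and> pg_prod PG (inv_word PG u @ u) = pg_unit PG"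
  proof (intro ballI)
    fix u assume "u \<in> pg_dom PG"
    then obtain n x where x: "x \<in> simp X n" and e: "u = enum X n x" by auto
    have iw: "inv_word PG u = enum X n (\<nu> n x)" using enum_nu[OF x] e by (simp add: inv_word_def)
    show "inv_word PG u @ u \<in> pg_dom PG \<and> pg_prod PG (inv_word PG u @ u) = pg_unit PG"
    proof (cases "n = 0")
      case True
      then have "u = []" using e enum0 by simp
      moreover have "[] = enum X 0 v0 \<and> v0 \<in> simp X 0" using red enum0 by simp
      ultimately show ?thesis by (auto simp: inv_word_def pg_unit_def)
    next
      case False
      then obtain y where y: "y \<in> simp X (2 * n)" "enum X (2 * n) y = enum X n (\<nu> n x) @ enum X n x"
          "prod_op X (2 * n) y = sset_unit X"
        using invc x False by (meson less_one not_le)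
      have "inv_word PG u @ u = enum X (2 * n) y" using y iw e by simp
      moreover have "enum X (2 * n) y \<in> pg_dom PG" using y(1) by auto
    ultimately show ?thesis using y prod_enum[OF y(1)] unit_eq pg_unit_PG by simp
    qed
  qed
qed

lemma dom_PG: "w \<in> simp (nerve PG) n \<Longrightarrow> \<exists>x\<in>simp X n. w = enum X n x"
proof -
  assume "w \<in> simp (nerve PG) n"
  then obtain m x where x: "x \<in> simp X m" "w = enum X m x" "length w = n" by (auto simp: nerve_def)
  then have "m = n" by simp
  then show ?thesis using x by auto
qed

lemma enum_face_nerve:
  assumes x: "x \<in> simp X n" and n: "1 \<le> n" and i: "i \<le> n"
  shows "enum X (n - 1) (face X n i x) = face (nerve PG) n i (enum X n x)"
proof -
  interpret Q: pg PG by (rule pg.intro, rule PG_pg)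
  show ?thesis
  proof (rule nth_equalityI)
    show "length (enum X (n - 1) (face X n i x)) = length (face (nerve PG) n i (enum X n x))"
      using n i by simp
    fix k assume "k < length (enum X (n - 1) (face X n i x))"
    then have k: "Suc k < n" by simp
    have l: "enum X (n - 1) (face X n i x) ! k =
    (if Suc k < i then enum X n x ! k else if i \<le> k then enum X n x ! (Suc k)
     else face X 2 1 (sub X n x k (Suc (Suc k))))" using enum_face[OF x i k] .
    have r: "face (nerve PG) n i (enum X n x) ! k = (if Suc k < i then enum X n x ! k
       else if Suc k = i then pg_prod PG [enum X n x ! k, enum X n x ! Suc k] else enum X n x ! Suc k)"
      using Q.face_nth[of "enum X n x" n i k] n i k by simp
    have s: "enum X (Suc (Suc k) - k) (sub X n x k (Suc (Suc k))) = take (Suc (Suc k) - k) (drop k (enum X n x))"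
      using enum_sub[OF x, of k "Suc (Suc k)"] k by simp
    have t: "take (Suc (Suc k) - k) (drop k (enum X n x)) = [enum X n x ! k, enum X n x ! Suc k]"
      using k by (simp add: Suc_diff_le take_Suc_conv_app_nth numeral_2_eq_2)
    have ss': "sub X n x k (Suc (Suc k)) \<in> simp X 2" using sub_simp[OF x, of k "Suc (Suc k)"] k by simp
    have "pg_prod PG [enum X n x ! k, enum X n x ! Suc k] = face X 2 1 (sub X n x k (Suc (Suc k)))"
      using prod_enum[OF ss'] s t prod_two by (simp add: numeral_2_eq_2)
    then show "enum X (n - 1) (face X n i x) ! k = face (nerve PG) n i (enum X n x) ! k"
      using l r by auto
  qed
qed

lemma enum_degen_nerve:
  assumes x: "x \<in> simp X n" and i: "i \<le> n"
  shows "enum X (Suc n) (degen X n i x) = degen (nerve PG) n i (enum X n x)"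
  using enum_degen'[OF x i] pg_unit_PG by (simp add: nerve_def)

lemma iso: "sset_iso X (nerve PG)"
  unfolding sset_iso_def
proof (intro exI conjI)
  show f: "sset_map X (nerve PG) (\<lambda>n x. enum X n x)"
    unfolding sset_map_def
  proof (intro conjI allI impI)
    fix n x assume "x \<in> simp X n"
    then show "enum X n x \<in> simp (nerve PG) n" by (auto simp: nerve_def)
  next
    fix n i x assume "1 \<le> n \<and> i \<le> n \<and> x \<in> simp X n"
    then show "enum X (n - 1) (face X n i x) = face (nerve PG) n i (enum X n x)"
      using enum_face_nerve by blast
  next
    fix n i x assume "i \<le> n \<and> x \<in> simp X n"
    then show "enum X (Suc n) (degen X n i x) = degen (nerve PG) n i (enum X n x)"
      using enum_degen_nerve by blast
  qed
  show "sset_map (nerve PG) X (\<lambda>n w. rep w)"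
    unfolding sset_map_def
  proof (intro conjI allI impI)
    fix n w assume "w \<in> simp (nerve PG) n"
    then obtain x where "x \<in> simp X n" "w = enum X n x" using dom_PG by blast
    then show "rep w \<in> simp X n" using rep_enum by simp
  next
    fix n i w assume a: "1 \<le> n \<and> i \<le> n \<and> w \<in> simp (nerve PG) n"
    then obtain x where x: "x \<in> simp X n" "w = enum X n x" using dom_PG by blast
    have "face X n i x \<in> simp X (n - 1)" using face_simp' x a by blast
    then show "rep (face (nerve PG) n i w) = face X n i (rep w)"
      using enum_face_nerve[OF x(1)] a x rep_enum by metis
  next
    fix n i w assume a: "i \<le> n \<and> w \<in> simp (nerve PG) n"
    then obtain x where x: "x \<in> simp X n" "w = enum X n x" using dom_PG by blast
    have "degen X n i x \<in> simp X (Suc n)" using degen_simp x a by blast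
    then show "rep (degen (nerve PG) n i w) = degen X n i (rep w)"
      using enum_degen_nerve[OF x(1)] a x rep_enum by metis
  qed
  show "\<forall>n. \<forall>x\<in>simp X n. rep (enum X n x) = x" using rep_enum by blast
  show "\<forall>n. \<forall>y\<in>simp (nerve PG) n. enum X n (rep y) = y"
    using dom_PG rep_enum by metis
qed

end

lemma part2:
  assumes M: "is_partial_group M" and M': "is_partial_group M'" and h: "pg_hom M M' \<beta>"
  shows "sset_map (nerve M) (nerve M') (nerve_map \<beta>)"
proof -
  interpret A: pg M by (rule pg.intro, rule M)
  interpret B: pg M' by (rule pg.intro, rule M')
  have hC: "\<And>x. x \<in> pg_carrier M \<Longrightarrow> \<beta> x \<in> pg_carrier M'" using h unfolding pg_hom_def by blast
  have hD: "\<And>u. u \<in> pg_dom M \<Longrightarrow> map \<beta> u \<in> pg_dom M'" using h unfolding pg_hom_def by blast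
  have hP: "\<And>u. u \<in> pg_dom M \<Longrightarrow> \<beta> (pg_prod M u) = pg_prod M' (map \<beta> u)" using h unfolding pg_hom_def by blast
  have h1: "\<beta> (pg_unit M) = pg_unit M'" using hP[of "[]"] by (simp add: pg_unit_def)
  show ?thesis
    unfolding sset_map_def nerve_map_def
  proof (intro conjI allI impI)
    fix n x assume "x \<in> simp (nerve M) n"
    then show "map \<beta> x \<in> simp (nerve M') n" using hD by simp
  next
    fix n i x assume a: "1 \<le> n \<and> i \<le> n \<and> x \<in> simp (nerve M) n"
    then have x: "x \<in> pg_dom M" "length x = n" and i: "1 \<le> n" "i \<le> n" by auto
    show "map \<beta> (face (nerve M) n i x) = face (nerve M') n i (map \<beta> x)"
    proof (rule nth_equalityI)
      show "length (map \<beta> (face (nerve M) n i x)) = length (face (nerve M') n i (map \<beta> x))"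
        using x i by simp
      fix k assume "k < length (map \<beta> (face (nerve M) n i x))"
      then have k: "k < n - 1" using x i by simp
      have "Suc k < length x" using k x by simp
      then have pp: "\<beta> (pg_prod M [x ! k, x ! Suc k]) = pg_prod M' [\<beta> (x ! k), \<beta> (x ! Suc k)]"
        using hP A.pair_dom[OF x(1)] by simp
      show "map \<beta> (face (nerve M) n i x) ! k = face (nerve M') n i (map \<beta> x) ! k"
        using A.face_nth[OF x(2) i k] B.face_nth[of "map \<beta> x" n i k] x i k pp
        by (cases "Suc k = i") auto
    qed
  next
    fix n i x assume a: "i \<le> n \<and> x \<in> simp (nerve M) n"
    then show "map \<beta> (degen (nerve M) n i x) = degen (nerve M') n i (map \<beta> x)"
      using h1 by (simp add: A.nerve_degen B.nerve_degen take_map drop_map)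
  qed
qed

lemma part3:
  assumes M: "is_partial_group M" and M': "is_partial_group M'" and g: "sset_map (nerve M) (nerve M') g"
  shows "\<exists>\<beta>. pg_hom M M' \<beta> \<and> (\<forall>n. \<forall>w\<in>simp (nerve M) n. g n w = nerve_map \<beta> n w)"
proof -
  interpret A: pg M by (rule pg.intro, rule M)
  interpret B: pg M' by (rule pg.intro, rule M')
  interpret S: ss "nerve M" by (rule ss.intro, rule A.nerve_sset)
  define \<beta> where "\<beta> x = hd (g 1 [x])" for x
  have gs: "\<And>n w. w \<in> simp (nerve M) n \<Longrightarrow> g n w \<in> simp (nerve M') n"
    using g unfolding sset_map_def by blast
  have g1: "g 1 [x] = [\<beta> x] \<and> \<beta> x \<in> pg_carrier M'" if x: "x \<in> pg_carrier M" for x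
  proof -
    have "[x] \<in> simp (nerve M) 1" using A.single_dom x by simp
    then have "g 1 [x] \<in> simp (nerve M') 1" using gs by blast
    then have gx: "g 1 [x] \<in> pg_dom M'" "length (g 1 [x]) = 1" by auto
    then obtain b where b: "g 1 [x] = [b]" by (cases "g 1 [x]") auto
    then have "[b] \<in> pg_dom M'" using gx by simp
    then have "b \<in> pg_carrier M'" using B.dom_C by fastforce
    then show ?thesis using b by (simp add: \<beta>_def)
  qed
  have claim: "g n w = map \<beta> w" if w: "w \<in> simp (nerve M) n" for n w
  proof -
    have wl: "length w = n" "w \<in> pg_dom M" using w by auto
    have gw: "g n w \<in> pg_dom M'" "length (g n w) = n" using gs[OF w] by auto
    have e: "enum (nerve M') n (g n w) = map (g 1) (enum (nerve M) n w)" using S.map_enum[OF g w] .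
    then have e2: "map (\<lambda>j. [g n w ! j]) [0..<n] = map (g 1) (map (\<lambda>j. [w ! j]) [0..<n])"
      using B.nerve_enum[OF gw(2)] A.nerve_enum[OF wl(1)] by simp
    show ?thesis
    proof (rule nth_equalityI)
      show "length (g n w) = length (map \<beta> w)" using gw wl by simp
      fix j assume "j < length (g n w)"
      then have j: "j < n" using gw by simp
      have "[g n w ! j] = g 1 [w ! j]" using arg_cong[OF e2, of "\<lambda>l. l ! j"] j by simp
      also have "\<dots> = [\<beta> (w ! j)]" using g1 A.nth_C[OF wl(2)] j wl by simp
      finally show "g n w ! j = map \<beta> w ! j" using j wl by simp
    qed
  qed
  have "pg_hom M M' \<beta>"
    unfolding pg_hom_def
  proof (rule conjI)
    show "\<forall>x\<in>pg_carrier M. \<beta> x \<in> pg_carrier M'" using g1 by blast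
  next
    show "\<forall>u\<in>pg_dom M. map \<beta> u \<in> pg_dom M' \<and> \<beta> (pg_prod M u) = pg_prod M' (map \<beta> u)"
    proof
    fix u assume u: "u \<in> pg_dom M"
    have us: "u \<in> simp (nerve M) (length u)" using u by simp
    have mu: "map \<beta> u \<in> pg_dom M'" using claim[OF us] gs[OF us] by simp
    have "g 1 (prod_op (nerve M) (length u) u) = prod_op (nerve M') (length u) (g (length u) u)"
      using S.map_prod[OF g us] .
    then have "g 1 [pg_prod M u] = prod_op (nerve M') (length (map \<beta> u)) (map \<beta> u)"
      using A.nerve_prod[OF u] claim[OF us] by simp
    then have "[\<beta> (pg_prod M u)] = [pg_prod M' (map \<beta> u)]"
      using B.nerve_prod[OF mu] g1[OF A.prod_C[OF u]] by simp
    then show "map \<beta> u \<in> pg_dom M' \<and> \<beta> (pg_prod M u) = pg_prod M' (map \<beta> u)" using mu by simp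
    qed
  qed
  then show ?thesis using claim by (auto simp: nerve_map_def)
qed

lemma part4:
  assumes "\<forall>n. \<forall>w\<in>simp (nerve M) n. nerve_map \<beta> n w = nerve_map \<beta>' n w" and M: "is_partial_group M"
  shows "\<forall>x\<in>pg_carrier M. \<beta> x = \<beta>' x"
proof
  interpret A: pg M by (rule pg.intro, rule M)
  fix x assume "x \<in> pg_carrier M"
  then have "[x] \<in> simp (nerve M) 1" using A.single_dom by simp
  then show "\<beta> x = \<beta>' x" using assms(1) by (force simp: nerve_map_def)
qed

lemma part5:
  fixes X :: "'s sset"
  assumes X: "red_N_inv_sset X"
  shows "\<exists>M :: 's partial_group. is_partial_group M \<and> sset_iso X (nerve M)"
proof -
  obtain \<nu> v0 where s: "is_sset X" and r: "simp X 0 = {v0}" and N: "N_sset X" and i: "inversion X \<nu>"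
    using X unfolding red_N_inv_sset_def reduced_def by blast
  have R: "rni X \<nu> v0"
    using s r N i unfolding rni_def rni_axioms_def ssinv_def ssinv_axioms_def ss_def inversion_def
    by blast
  show ?thesis using rni.PG_pg[OF R] rni.iso[OF R] by blast
qed

theorem theorem4p8:
  shows "(\<forall>M :: 'a partial_group. is_partial_group M \<longrightarrow> red_N_inv_sset (nerve M))
   \<and> (\<forall>(M :: 'a partial_group) (M' :: 'b partial_group) \<beta>.
        is_partial_group M \<and> is_partial_group M' \<and> pg_hom M M' \<beta> \<longrightarrow>
          sset_map (nerve M) (nerve M') (nerve_map \<beta>))
   \<and> (\<forall>(M :: 'a partial_group) (M' :: 'b partial_group) g.
        is_partial_group M \<and> is_partial_group M' \<and> sset_map (nerve M) (nerve M') g \<longrightarrow>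
          (\<exists>\<beta>. pg_hom M M' \<beta> \<and> (\<forall>n. \<forall>w\<in>simp (nerve M) n. g n w = nerve_map \<beta> n w)))
   \<and> (\<forall>(M :: 'a partial_group) (M' :: 'b partial_group) \<beta> \<beta>'.
        is_partial_group M \<and> is_partial_group M' \<and> pg_hom M M' \<beta> \<and> pg_hom M M' \<beta>'
        \<and> (\<forall>n. \<forall>w\<in>simp (nerve M) n. nerve_map \<beta> n w = nerve_map \<beta>' n w) \<longrightarrow>
          (\<forall>x\<in>pg_carrier M. \<beta> x = \<beta>' x))
   \<and> (\<forall>X :: 's sset. red_N_inv_sset X \<longrightarrow>
        (\<exists>M :: 's partial_group. is_partial_group M \<and> sset_iso X (nerve M)))"
proof (intro conjI allI impI)
  fix M :: "'a partial_group" assume "is_partial_group M"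
  then show "red_N_inv_sset (nerve M)" using pg.nerve_rni pg.intro by blast
next
  fix M :: "'a partial_group" and M' :: "'b partial_group" and \<beta>
  assume "is_partial_group M \<and> is_partial_group M' \<and> pg_hom M M' \<beta>"
  then show "sset_map (nerve M) (nerve M') (nerve_map \<beta>)" using part2 by blast
next
  fix M :: "'a partial_group" and M' :: "'b partial_group" and g
  assume "is_partial_group M \<and> is_partial_group M' \<and> sset_map (nerve M) (nerve M') g"
  then show "\<exists>\<beta>. pg_hom M M' \<beta> \<and> (\<forall>n. \<forall>w\<in>simp (nerve M) n. g n w = nerve_map \<beta> n w)"
    using part3 by blast
next
  fix M :: "'a partial_group" and M' :: "'b partial_group" and \<beta> \<beta>'
  assume "is_partial_group M \<and> is_partial_group M' \<and> pg_hom M M' \<beta> \<and> pg_hom M M' \<beta>'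
        \<and> (\<forall>n. \<forall>w\<in>simp (nerve M) n. nerve_map \<beta> n w = nerve_map \<beta>' n w)"
  then show "\<forall>x\<in>pg_carrier M. \<beta> x = \<beta>' x" using part4 by blast
next
  fix X :: "'s sset" assume "red_N_inv_sset X"
  then show "\<exists>M :: 's partial_group. is_partial_group M \<and> sset_iso X (nerve M)" using part5 by blast
qed

end
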